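(* Let $G$ be a finite connected graph containing two distinct cycles, and suppose $\mathrm{cat}(G)=3$. Then $|V(G)|=6$ and $G$ consists of two vertex-disjoint triangles together with a single edge joining a vertex of one triangle to a vertex of the other.
   Context: Cat Herding is played on a simple graph $G$. The cat first places its token on a vertex. Then the players alternate, the herder moving first: the herder deletes one edge of the current graph, and then, unless the cat's current vertex has degree $0$ in the current graph, the cat moves its token along a path with at least one edge in the current graph to a different vertex. The cat is captured when its vertex has degree $0$ in the current graph, and the game ends; the score is the number of edges deleted. For a finite graph $G$ and $v\in V(G)$, $\mathrm{cat}(G,v)$ is the score under optimal play (herder minimizing, cat maximizing) when the cat starts at $v$, and $\mathrm{cat}(G)=\max_{v}\mathrm{cat}(G,v)$. *)

theory Defs
  imports Main
begin

definition simple_graph :: "'a set \<Rightarrow> 'a set set \<Rightarrow> bool" where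
  "simple_graph V E \<longleftrightarrow> finite V \<and>
     (\<forall>e\<in>E. \<exists>x y. x \<noteq> y \<and> x \<in> V \<and> y \<in> V \<and> e = {x, y})"

definition isolated :: "'a set set \<Rightarrow> 'a \<Rightarrow> bool" where
  "isolated E v \<longleftrightarrow> (\<forall>e\<in>E. v \<notin> e)"

definition reach :: "'a set set \<Rightarrow> 'a \<Rightarrow> 'a \<Rightarrow> bool" where
  "reach E v w \<longleftrightarrow> (v, w) \<in> {(x, y). x \<noteq> y \<and> {x, y} \<in> E}\<^sup>+"

definition connected_graph :: "'a set \<Rightarrow> 'a set set \<Rightarrow> bool" where
  "connected_graph V E \<longleftrightarrow> V \<noteq> {} \<and> (\<forall>x\<in>V. \<forall>y\<in>V. x = y \<or> reach E x y)"

definition is_cycle :: "'a set set \<Rightarrow> 'a set set \<Rightarrow> bool" where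
  "is_cycle E C \<longleftrightarrow> (\<exists>vs. length vs \<ge> 3 \<and> distinct vs \<and>
     (\<forall>i<length vs. {vs ! i, vs ! ((i + 1) mod length vs)} \<in> E) \<and>
     C = {{vs ! i, vs ! ((i + 1) mod length vs)} | i. i < length vs})"

text \<open>herder_wins E v k: in the position with current edge set E and the cat at v
  (herder to move), the herder can guarantee that the cat is captured after at most
  k further edge deletions.\<close>
inductive herder_wins :: "'a set set \<Rightarrow> 'a \<Rightarrow> nat \<Rightarrow> bool" where
  captured: "isolated E v \<Longrightarrow> herder_wins E v k"
| step: "e \<in> E \<Longrightarrow>
    (\<forall>w. w \<noteq> v \<and> reach (E - {e}) v w \<longrightarrow> herder_wins (E - {e}) w k) \<Longrightarrow>
    herder_wins E v (Suc k)"

definition cat_at :: "'a set set \<Rightarrow> 'a \<Rightarrow> nat" where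
  "cat_at E v = (LEAST k. herder_wins E v k)"

definition cat_num :: "'a set \<Rightarrow> 'a set set \<Rightarrow> nat" where
  "cat_num V E = Max ((\<lambda>v. cat_at E v) ` V)"

end

theory Submission
  imports Defs
begin

lemma hw_mono: "herder_wins E v k \<Longrightarrow> k \<le> k' \<Longrightarrow> herder_wins E v k'"
proof (induction E v k arbitrary: k' rule: herder_wins.induct)
  case (captured E v k) then show ?case by (simp add: herder_wins.captured)
next
  case (step e E v k)
  then obtain k'' where k'': "k' = Suc k''" "k \<le> k''" by (cases k') auto
  show ?case unfolding k''(1)
    apply (rule herder_wins.step[OF step.hyps(1)])
    using step.IH k''(2) by simp
qed

lemma hw_card: "finite E \<Longrightarrow> herder_wins E v (card E)"
proof (induction "card E" arbitrary: E v)
  case 0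
  then have "E = {}" by simp
  then show ?case by (auto intro: herder_wins.captured simp: isolated_def)
next
  case (Suc n)
  then have "E \<noteq> {}" by auto
  then obtain e where e: "e \<in> E" by blast
  have c: "card (E - {e}) = n" using Suc e by simp
  have "\<forall>w. herder_wins (E - {e}) w n" using Suc.hyps(1)[OF c[symmetric]] Suc.prems c by auto
  then show ?case using herder_wins.step[OF e, of v n] Suc.hyps(2) by simp
qed

lemma hw0: "herder_wins E v 0 \<Longrightarrow> isolated E v"
  by (cases rule: herder_wins.cases) auto

lemma hwSuc: "herder_wins E v (Suc k) \<Longrightarrow> isolated E v \<or>
   (\<exists>e\<in>E. \<forall>w. w \<noteq> v \<and> reach (E - {e}) v w \<longrightarrow> herder_wins (E - {e}) w k)"
  by (cases rule: herder_wins.cases) auto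

lemma not_hw_Suc:
  assumes "\<not> isolated E v"
    and "\<forall>e\<in>E. \<exists>w. w \<noteq> v \<and> reach (E - {e}) v w \<and> \<not> herder_wins (E - {e}) w k"
  shows "\<not> herder_wins E v (Suc k)"
proof
  assume h: "herder_wins E v (Suc k)"
  have "\<not> isolated E v" by (rule assms(1))
  then obtain e where e: "e \<in> E" and all: "\<forall>w. w \<noteq> v \<and> reach (E - {e}) v w \<longrightarrow> herder_wins (E - {e}) w k"
    using hwSuc[OF h] by blast
  obtain w where "w \<noteq> v \<and> reach (E - {e}) v w" "\<not> herder_wins (E - {e}) w k"
    using assms(2) e by blast
  then show False using all by blast
qed

lemma reach_ends: "reach H a b \<Longrightarrow> a \<in> \<Union>H \<and> b \<in> \<Union>H"
  unfolding reach_def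
proof (induction rule: trancl_induct)
  case (base y) then show ?case by auto
next
  case (step y z) then show ?case by auto
qed

lemma reach_mono: "reach H a b \<Longrightarrow> H \<subseteq> H' \<Longrightarrow> reach H' a b"
  unfolding reach_def by (erule trancl_mono) auto

lemma reach_map:
  assumes "reach H a b" "(\<lambda>e. g ` e) ` H \<subseteq> E" "inj_on g (\<Union>H)"
  shows "reach E (g a) (g b)"
  using assms(1) unfolding reach_def
proof (induction rule: trancl_induct)
  case (base y)
  then have "a \<noteq> y" "{a, y} \<in> H" by auto
  moreover have "g ` {a, y} \<in> E" using assms(2) calculation by blast
  moreover have "g a \<noteq> g y" using assms(3) calculation unfolding inj_on_def by blast
  ultimately show ?case by auto
next
  case (step y z)
  then have "y \<noteq> z" "{y, z} \<in> H" by auto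
  moreover have "g ` {y, z} \<in> E" using assms(2) calculation by blast
  moreover have "g y \<noteq> g z" using assms(3) calculation unfolding inj_on_def by blast
  ultimately have "(g y, g z) \<in> {(x, y). x \<noteq> y \<and> {x, y} \<in> E}" by auto
  then show ?case using step.IH by (rule trancl_into_trancl[rotated])
qed

lemma hw_transfer:
  "herder_wins E v k \<Longrightarrow> inj_on g (\<Union>H \<union> {u}) \<Longrightarrow> g u = v \<Longrightarrow> (\<lambda>e. g ` e) ` H \<subseteq> E
   \<Longrightarrow> herder_wins H u k"
proof (induction E v k arbitrary: H u rule: herder_wins.induct)
  case (captured E v k)
  have "isolated H u"
    unfolding isolated_def
  proof
    fix h assume "h \<in> H"
    then have "g ` h \<in> E" using captured by auto
    then show "u \<notin> h" using captured unfolding isolated_def by auto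
  qed
  then show ?case by (rule herder_wins.captured)
next
  case (step e E v k)
  show ?case
  proof (cases "\<exists>h\<in>H. g ` h = e")
    case True
    then obtain h where h: "h \<in> H" "g ` h = e" by blast
    have img: "(\<lambda>e. g ` e) ` (H - {h}) \<subseteq> E - {e}"
    proof
      fix x assume "x \<in> (\<lambda>e. g ` e) ` (H - {h})"
      then obtain h' where h': "h' \<in> H" "h' \<noteq> h" "x = g ` h'" by auto
      have "inj_on g (\<Union>H)" using step.prems(1) by (rule inj_on_subset) auto
      then have "g ` h' \<noteq> g ` h" using h' h(1) by (simp add: inj_on_image_eq_iff Union_upper)
      then show "x \<in> E - {e}" using h' h step.prems(3) by auto
    qed
    show ?thesis
    proof (rule herder_wins.step[OF h(1)], intro allI impI)
      fix w assume w: "w \<noteq> u \<and> reach (H - {h}) u w"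
      have wH: "w \<in> \<Union>H" "u \<in> \<Union>H" using reach_ends[of "H - {h}" u w] w by auto
      have "inj_on g (\<Union>(H - {h}))" using step.prems(1) by (rule inj_on_subset) auto
      then have r: "reach (E - {e}) v (g w)"
        using reach_map[OF conjunct2[OF w] img] step.prems(2) by simp
      have "g w \<noteq> v" using step.prems(1,2) wH w by (auto simp: inj_on_def)
      note IH = conjunct2[OF mp[OF spec[OF step.IH, of "g w"] conjI[OF this r]]]
      have "inj_on g (\<Union>(H - {h}) \<union> {w})" by (rule inj_on_subset[OF step.prems(1)]) (use wH in auto)
      then show "herder_wins (H - {h}) w k" using IH[rule_format, OF _ refl img] by blast
    qed
  next
    case False
    then have img: "(\<lambda>e. g ` e) ` H \<subseteq> E - {e}" using step.prems(3) by auto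
    show ?thesis
    proof (cases "H = {}")
      case True then show ?thesis by (auto intro: herder_wins.captured simp: isolated_def)
    next
      case False
      then obtain h where h: "h \<in> H" by blast
      have img2: "(\<lambda>e. g ` e) ` (H - {h}) \<subseteq> E - {e}" using img by auto
      show ?thesis
      proof (rule herder_wins.step[OF h], intro allI impI)
        fix w assume w: "w \<noteq> u \<and> reach (H - {h}) u w"
        have wH: "w \<in> \<Union>H" "u \<in> \<Union>H" using reach_ends[of "H - {h}" u w] w by auto
        have "inj_on g (\<Union>(H - {h}))" using step.prems(1) by (rule inj_on_subset) auto
        then have r: "reach (E - {e}) v (g w)"
          using reach_map[OF conjunct2[OF w] img2] step.prems(2) by simp
        have "g w \<noteq> v" using step.prems(1,2) wH w by (auto simp: inj_on_def)
        note IH = conjunct2[OF mp[OF spec[OF step.IH, of "g w"] conjI[OF this r]]]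
        have "inj_on g (\<Union>(H - {h}) \<union> {w})" by (rule inj_on_subset[OF step.prems(1)]) (use wH in auto)
        then show "herder_wins (H - {h}) w k" using IH[rule_format, OF _ refl img2] by blast
      qed
    qed
  qed
qed

definition eset :: "(nat \<times> nat) list \<Rightarrow> nat set set" where
  "eset es = (\<lambda>(a, b). {a, b}) ` set es"

definition dele :: "nat \<times> nat \<Rightarrow> (nat \<times> nat) list \<Rightarrow> (nat \<times> nat) list" where
  "dele e es = filter (\<lambda>(a, b). \<not> ((a = fst e \<and> b = snd e) \<or> (a = snd e \<and> b = fst e))) es"

definition nbrs :: "(nat \<times> nat) list \<Rightarrow> nat \<Rightarrow> nat list" where
  "nbrs es x = map snd (filter (\<lambda>(a, b). a = x \<and> b \<noteq> x) es) @ map fst (filter (\<lambda>(a, b). b = x \<and> a \<noteq> x) es)"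

fun pchk :: "(nat \<times> nat) list \<Rightarrow> nat \<Rightarrow> nat list \<Rightarrow> bool" where
  "pchk es x [] = True"
| "pchk es x (y # ys) = (x \<noteq> y \<and> ((x, y) \<in> set es \<or> (y, x) \<in> set es) \<and> pchk es y ys)"

definition chk1 :: "(nat \<times> nat) list \<Rightarrow> nat \<Rightarrow> bool" where
  "chk1 es v = (2 \<le> length (remdups (nbrs es v)))"

definition chk2 :: "(nat \<times> nat) list \<Rightarrow> nat \<Rightarrow> nat list list \<Rightarrow> bool" where
  "chk2 es v ps = (nbrs es v \<noteq> [] \<and> length ps = length es \<and>
     list_all (\<lambda>(e, p). p \<noteq> [] \<and> last p \<noteq> v \<and> pchk (dele e es) v p \<and> chk1 (dele e es) (last p)) (zip es ps))"

definition chk3 :: "(nat \<times> nat) list \<Rightarrow> nat \<Rightarrow> (nat list \<times> nat list list) list \<Rightarrow> bool" where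
  "chk3 es v cs = (nbrs es v \<noteq> [] \<and> length cs = length es \<and>
     list_all (\<lambda>(e, p, ps). p \<noteq> [] \<and> last p \<noteq> v \<and> pchk (dele e es) v p \<and> chk2 (dele e es) (last p) ps) (zip es cs))"

lemma eset_dele: "eset (dele e es) = eset es - {{fst e, snd e}}"
proof -
  have "\<And>a b. {a, b} = {fst e, snd e} \<longleftrightarrow> ((a = fst e \<and> b = snd e) \<or> (a = snd e \<and> b = fst e))"
    by (rule doubleton_eq_iff)
  then show ?thesis unfolding eset_def dele_def by fastforce
qed
lemma nbrs_sound: "y \<in> set (nbrs es x) \<Longrightarrow> y \<noteq> x \<and> {x, y} \<in> eset es"
  unfolding nbrs_def eset_def by (auto simp: image_iff insert_commute) 

lemma nbrs_not_isolated: "nbrs es x \<noteq> [] \<Longrightarrow> \<not> isolated (eset es) x"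
proof
  assume "nbrs es x \<noteq> []" "isolated (eset es) x"
  then obtain y where "y \<in> set (nbrs es x)" by (cases "nbrs es x") auto
  then have "{x, y} \<in> eset es" using nbrs_sound by blast
  then show False using \<open>isolated (eset es) x\<close> unfolding isolated_def by blast
qed

lemma reach_step: "y \<noteq> x \<Longrightarrow> {x, y} \<in> E \<Longrightarrow> (x = v \<or> reach E v x) \<Longrightarrow> reach E v y"
  unfolding reach_def
proof -
  assume a: "y \<noteq> x" "{x, y} \<in> E" "x = v \<or> (v, x) \<in> {(x, y). x \<noteq> y \<and> {x, y} \<in> E}\<^sup>+"
  have s: "(x, y) \<in> {(x, y). x \<noteq> y \<and> {x, y} \<in> E}" using a by auto
  show "(v, y) \<in> {(x, y). x \<noteq> y \<and> {x, y} \<in> E}\<^sup>+"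
  proof (cases "x = v")
    case True then show ?thesis using s by auto
  next
    case False then show ?thesis using a(3) s by (meson trancl_into_trancl)
  qed
qed

lemma pchk_sound:
  "pchk es x ys \<Longrightarrow> ys \<noteq> [] \<Longrightarrow> (x = v \<or> reach (eset es) v x) \<Longrightarrow> reach (eset es) v (last ys)"
proof (induction ys arbitrary: x)
  case Nil then show ?case by simp
next
  case (Cons y ys)
  have xy: "x \<noteq> y" "{x, y} \<in> eset es"
    using Cons.prems(1) unfolding eset_def by (auto simp: image_iff insert_commute)
  have r: "reach (eset es) v y" using reach_step[OF xy(1)[symmetric] xy(2) Cons.prems(3)] .
  show ?case
  proof (cases "ys = []")
    case True then show ?thesis using r by simp
  next
    case False
    then show ?thesis using Cons.IH[of y] Cons.prems(1) r by simp
  qed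
qed

lemma pchk_reach: "pchk es v p \<Longrightarrow> p \<noteq> [] \<Longrightarrow> reach (eset es) v (last p)"
  using pchk_sound by blast

lemma two_elems: "2 \<le> length (remdups xs) \<Longrightarrow> \<exists>a b. a \<noteq> b \<and> a \<in> set xs \<and> b \<in> set xs"
proof (rule ccontr)
  assume h: "2 \<le> length (remdups xs)" and n: "\<not> (\<exists>a b. a \<noteq> b \<and> a \<in> set xs \<and> b \<in> set xs)"
  have "\<forall>a\<in>set xs. \<forall>b\<in>set xs. a = b" using n by auto
  then have "card (set xs) \<le> Suc 0" by (simp add: card_le_Suc0_iff_eq)
  then show False using h by (simp add: length_remdups_card_conv)
qed

lemma chk1_sound: "chk1 es v \<Longrightarrow> \<not> herder_wins (eset es) v (Suc 0)"
proof
  assume c: "chk1 es v" and h: "herder_wins (eset es) v (Suc 0)"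
  obtain a b where ab: "a \<noteq> b" "a \<in> set (nbrs es v)" "b \<in> set (nbrs es v)"
    using two_elems c unfolding chk1_def by blast
  have a: "a \<noteq> v" "{v, a} \<in> eset es" and b: "b \<noteq> v" "{v, b} \<in> eset es"
    using nbrs_sound ab by blast+
  have ni: "\<not> isolated (eset es) v" using a unfolding isolated_def by blast
  then obtain e where e: "e \<in> eset es"
    and all: "\<forall>w. w \<noteq> v \<and> reach (eset es - {e}) v w \<longrightarrow> herder_wins (eset es - {e}) w 0"
    using hwSuc[OF h] by blast
  have "{v, a} \<noteq> {v, b}" using ab(1) a(1) b(1) by (auto simp: doubleton_eq_iff)
  then obtain c where c: "c \<noteq> v" "{v, c} \<in> eset es - {e}" using a b by blast
  then have "reach (eset es - {e}) v c" using reach_step[of c v "eset es - {e}" v] by auto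
  then have "herder_wins (eset es - {e}) c 0" using all c(1) by blast
  then have "isolated (eset es - {e}) c" by (rule hw0)
  then show False using c(2) unfolding isolated_def by blast
qed

lemma list_all_zip_nth:
  assumes "list_all P (zip xs ys)" "length ys = length xs" "i < length xs"
  shows "P (xs ! i, ys ! i)"
  using assms by (auto simp: list_all_length)

lemma eset_elem: "e \<in> eset es \<Longrightarrow> \<exists>i<length es. e = {fst (es ! i), snd (es ! i)}"
  unfolding eset_def by (auto simp: in_set_conv_nth split: prod.splits) (metis fst_conv snd_conv)

lemma chk2_sound: "chk2 es v ps \<Longrightarrow> \<not> herder_wins (eset es) v (Suc (Suc 0))"
proof -
  assume c: "chk2 es v ps"
  show ?thesis
  proof (rule not_hw_Suc)
    show "\<not> isolated (eset es) v" using c nbrs_not_isolated unfolding chk2_def by blast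
    show "\<forall>e\<in>eset es. \<exists>w. w \<noteq> v \<and> reach (eset es - {e}) v w \<and> \<not> herder_wins (eset es - {e}) w (Suc 0)"
    proof
      fix e assume "e \<in> eset es"
      then obtain i where i: "i < length es" "e = {fst (es ! i), snd (es ! i)}" using eset_elem by blast
      have P: "ps ! i \<noteq> [] \<and> last (ps ! i) \<noteq> v \<and> pchk (dele (es ! i) es) v (ps ! i) \<and> chk1 (dele (es ! i) es) (last (ps ! i))"
        using list_all_zip_nth[of _ es ps i] c i(1) unfolding chk2_def by fastforce
      have eq: "eset (dele (es ! i) es) = eset es - {e}" using i(2) eset_dele by simp
      show "\<exists>w. w \<noteq> v \<and> reach (eset es - {e}) v w \<and> \<not> herder_wins (eset es - {e}) w (Suc 0)"
        using P pchk_reach[of "dele (es ! i) es" v "ps ! i"] chk1_sound[of "dele (es ! i) es"] eq by metis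
    qed
  qed
qed

lemma chk3_sound: "chk3 es v cs \<Longrightarrow> \<not> herder_wins (eset es) v (Suc (Suc (Suc 0)))"
proof -
  assume c: "chk3 es v cs"
  show ?thesis
  proof (rule not_hw_Suc)
    show "\<not> isolated (eset es) v" using c nbrs_not_isolated unfolding chk3_def by blast
    show "\<forall>e\<in>eset es. \<exists>w. w \<noteq> v \<and> reach (eset es - {e}) v w \<and> \<not> herder_wins (eset es - {e}) w (Suc (Suc 0))"
    proof
      fix e assume "e \<in> eset es"
      then obtain i where i: "i < length es" "e = {fst (es ! i), snd (es ! i)}" using eset_elem by blast
      have P: "fst (cs ! i) \<noteq> [] \<and> last (fst (cs ! i)) \<noteq> v \<and> pchk (dele (es ! i) es) v (fst (cs ! i)) \<and> chk2 (dele (es ! i) es) (last (fst (cs ! i))) (snd (cs ! i))"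
        using list_all_zip_nth[of _ es cs i] c i(1) unfolding chk3_def by (fastforce split: prod.splits)
      have eq: "eset (dele (es ! i) es) = eset es - {e}" using i(2) eset_dele by simp
      show "\<exists>w. w \<noteq> v \<and> reach (eset es - {e}) v w \<and> \<not> herder_wins (eset es - {e}) w (Suc (Suc 0))"
        using P pchk_reach[of "dele (es ! i) es" v "fst (cs ! i)"] chk2_sound[of "dele (es ! i) es"] eq by metis
    qed
  qed
qed

lemma obstruct:
  assumes hw3: "\<forall>v. herder_wins E v 3"
    and c: "chk3 es u cs"
    and d: "distinct xs"
    and es: "list_all (\<lambda>(a, b). a < length xs \<and> b < length xs \<and> {xs ! a, xs ! b} \<in> E) es"
    and u: "u < length xs"
  shows False
proof -
  let ?H = "eset es"
  have sub: "\<Union>?H \<union> {u} \<subseteq> {..<length xs}"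
    using es u unfolding eset_def by (auto simp: list_all_iff)
  have inj: "inj_on (nth xs) (\<Union>?H \<union> {u})"
    by (rule inj_on_subset[OF _ sub]) (simp add: inj_on_nth d)
  have img: "(\<lambda>e. (nth xs) ` e) ` ?H \<subseteq> E"
    using es unfolding eset_def by (auto simp: list_all_iff)
  have "herder_wins E (xs ! u) 3" using hw3 by blast
  then have "herder_wins ?H u 3" using hw_transfer[OF _ inj refl img] by blast
  then show False using chk3_sound[OF c] by (simp add: numeral_eq_Suc)
qed

lemma chk_0: "chk3 [(0, 2), (0, 3), (1, 2), (1, 3), (2, 3)] 0 [([3, 1], [[2], [3], [2], [3]]), ([2, 1], [[2], [3], [2], [2]]), ([2], [[3], [3], [0], [0]]), ([3], [[2], [2], [0], [0]]), ([2], [[1], [1], [0], [0]])]"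
  by code_simp

lemma obs_0:
  assumes "\<forall>v. herder_wins E v 3" "distinct [x0, x1, x2, x3]"
    "{x0, x2} \<in> E"
    "{x0, x3} \<in> E"
    "{x1, x2} \<in> E"
    "{x1, x3} \<in> E"
    "{x2, x3} \<in> E"
  shows False
  by (rule obstruct[OF assms(1) chk_0 assms(2)]) (use assms(3-) in simp_all)

lemma chk_1: "chk3 [(0, 1), (0, 2), (1, 3), (2, 4), (3, 5), (4, 5)] 0 [([2, 4], [[5], [2], [5], [2], [2]]), ([1, 3], [[5], [5], [1], [1], [1]]), ([2], [[4], [4], [0], [0], [0]]), ([1], [[3], [3], [0], [0], [0]]), ([2], [[4], [4], [0], [0], [0]]), ([1], [[3], [3], [0], [0], [0]])]"
  by code_simp

lemma obs_1:
  assumes "\<forall>v. herder_wins E v 3" "distinct [x0, x1, x2, x3, x4, x5]"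
    "{x0, x1} \<in> E"
    "{x0, x2} \<in> E"
    "{x1, x3} \<in> E"
    "{x2, x4} \<in> E"
    "{x3, x5} \<in> E"
    "{x4, x5} \<in> E"
  shows False
  by (rule obstruct[OF assms(1) chk_1 assms(2)]) (use assms(3-) in simp_all)

lemma chk_2: "chk3 [(0, 1), (0, 3), (1, 4), (2, 3), (2, 4), (3, 4)] 0 [([3], [[2], [2], [4], [4], [2]]), ([1, 4], [[2], [2], [1], [1], [1]]), ([3], [[2], [2], [0], [0], [0]]), ([1], [[4], [4], [0], [0], [0]]), ([1], [[4], [4], [0], [0], [0]]), ([1], [[4], [4], [0], [0], [0]])]"
  by code_simp

lemma obs_2:
  assumes "\<forall>v. herder_wins E v 3" "distinct [x0, x1, x2, x3, x4]"
    "{x0, x1} \<in> E"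
    "{x0, x3} \<in> E"
    "{x1, x4} \<in> E"
    "{x2, x3} \<in> E"
    "{x2, x4} \<in> E"
    "{x3, x4} \<in> E"
  shows False
  by (rule obstruct[OF assms(1) chk_2 assms(2)]) (use assms(3-) in simp_all)

lemma chk_3: "chk3 [(0, 1), (0, 4), (1, 4), (2, 3), (2, 4), (3, 4)] 0 [([4, 2], [[3], [3], [4], [3], [4]]), ([1, 4], [[2], [2], [1], [1], [1]]), ([4], [[2], [2], [0], [0], [0]]), ([1], [[4], [4], [0], [0], [0]]), ([1], [[4], [4], [0], [0], [0]]), ([1], [[4], [4], [0], [0], [0]])]"
  by code_simp

lemma obs_3:
  assumes "\<forall>v. herder_wins E v 3" "distinct [x0, x1, x2, x3, x4]"
    "{x0, x1} \<in> E"
    "{x0, x4} \<in> E"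
    "{x1, x4} \<in> E"
    "{x2, x3} \<in> E"
    "{x2, x4} \<in> E"
    "{x3, x4} \<in> E"
  shows False
  by (rule obstruct[OF assms(1) chk_3 assms(2)]) (use assms(3-) in simp_all)

lemma chk_4: "chk3 [(0, 1), (1, 5), (2, 3), (2, 4), (3, 5), (4, 5)] 2 [([3], [[2], [5], [5], [2], [2]]), ([3], [[2], [5], [5], [2], [2]]), ([4, 5], [[4], [4], [1], [1], [1]]), ([3, 5], [[3], [3], [1], [1], [1]]), ([4], [[2], [2], [5], [5], [2]]), ([3], [[2], [2], [5], [5], [2]])]"
  by code_simp

lemma obs_4:
  assumes "\<forall>v. herder_wins E v 3" "distinct [x0, x1, x2, x3, x4, x5]"
    "{x0, x1} \<in> E"
    "{x1, x5} \<in> E"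
    "{x2, x3} \<in> E"
    "{x2, x4} \<in> E"
    "{x3, x5} \<in> E"
    "{x4, x5} \<in> E"
  shows False
  by (rule obstruct[OF assms(1) chk_4 assms(2)]) (use assms(3-) in simp_all)

lemma chk_5: "chk3 [(0, 2), (1, 4), (2, 5), (3, 4), (3, 5), (4, 5)] 3 [([4], [[3], [3], [5], [5], [3]]), ([4], [[3], [3], [5], [5], [3]]), ([5], [[3], [3], [4], [4], [3]]), ([5], [[4], [2], [4], [2], [2]]), ([4, 5], [[4], [2], [4], [2], [2]]), ([5], [[3], [2], [3], [2], [2]])]"
  by code_simp

lemma obs_5:
  assumes "\<forall>v. herder_wins E v 3" "distinct [x0, x1, x2, x3, x4, x5]"
    "{x0, x2} \<in> E"
    "{x1, x4} \<in> E"
    "{x2, x5} \<in> E"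
    "{x3, x4} \<in> E"
    "{x3, x5} \<in> E"
    "{x4, x5} \<in> E"
  shows False
  by (rule obstruct[OF assms(1) chk_5 assms(2)]) (use assms(3-) in simp_all)

lemma chk_6: "chk3 [(0, 3), (0, 4), (1, 3), (1, 4), (2, 3), (2, 4)] 0 [([4], [[1], [2], [2], [1], [1]]), ([3], [[1], [2], [2], [1], [1]]), ([3], [[2], [2], [0], [0], [0]]), ([3], [[2], [2], [0], [0], [0]]), ([3], [[1], [1], [0], [0], [0]]), ([3], [[1], [1], [0], [0], [0]])]"
  by code_simp

lemma obs_6:
  assumes "\<forall>v. herder_wins E v 3" "distinct [x0, x1, x2, x3, x4]"
    "{x0, x3} \<in> E"
    "{x0, x4} \<in> E"
    "{x1, x3} \<in> E"
    "{x1, x4} \<in> E"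
    "{x2, x3} \<in> E"
    "{x2, x4} \<in> E"
  shows False
  by (rule obstruct[OF assms(1) chk_6 assms(2)]) (use assms(3-) in simp_all)

lemma chk_7: "chk3 [(0, 5), (1, 2), (1, 3), (2, 4), (3, 5), (4, 5)] 1 [([2], [[4], [4], [1], [1], [1]]), ([3, 5], [[3], [4], [3], [4], [3]]), ([2, 4], [[2], [5], [5], [2], [2]]), ([3], [[1], [5], [5], [1], [1]]), ([2], [[1], [4], [4], [1], [1]]), ([3], [[1], [5], [5], [1], [1]])]"
  by code_simp

lemma obs_7:
  assumes "\<forall>v. herder_wins E v 3" "distinct [x0, x1, x2, x3, x4, x5]"
    "{x0, x5} \<in> E"
    "{x1, x2} \<in> E"
    "{x1, x3} \<in> E"
    "{x2, x4} \<in> E"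
    "{x3, x5} \<in> E"
    "{x4, x5} \<in> E"
  shows False
  by (rule obstruct[OF assms(1) chk_7 assms(2)]) (use assms(3-) in simp_all)

lemma chk_8: "chk3 [(0, 1), (0, 2), (1, 3), (2, 4), (3, 5), (4, 6), (5, 6)] 0 [([2, 4], [[6], [2], [6], [2], [2], [2]]), ([1, 3], [[5], [5], [1], [1], [1], [1]]), ([2], [[4], [4], [0], [0], [0], [0]]), ([1], [[3], [3], [0], [0], [0], [0]]), ([2], [[4], [4], [0], [0], [0], [0]]), ([1], [[3], [3], [0], [0], [0], [0]]), ([1], [[3], [3], [0], [0], [0], [0]])]"
  by code_simp

lemma obs_8:
  assumes "\<forall>v. herder_wins E v 3" "distinct [x0, x1, x2, x3, x4, x5, x6]"
    "{x0, x1} \<in> E"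
    "{x0, x2} \<in> E"
    "{x1, x3} \<in> E"
    "{x2, x4} \<in> E"
    "{x3, x5} \<in> E"
    "{x4, x6} \<in> E"
    "{x5, x6} \<in> E"
  shows False
  by (rule obstruct[OF assms(1) chk_8 assms(2)]) (use assms(3-) in simp_all)

lemma chk_9: "chk3 [(0, 2), (1, 6), (2, 3), (3, 6), (4, 5), (4, 6), (5, 6)] 4 [([5], [[4], [4], [4], [6], [6], [4]]), ([5], [[4], [4], [4], [6], [6], [4]]), ([5], [[4], [4], [4], [6], [6], [4]]), ([5], [[4], [4], [4], [6], [6], [4]]), ([6, 3], [[6], [2], [6], [2], [2], [2]]), ([5, 6], [[3], [3], [5], [5], [3], [3]]), ([6], [[3], [3], [4], [4], [3], [3]])]"
  by code_simp

lemma obs_9: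
  assumes "\<forall>v. herder_wins E v 3" "distinct [x0, x1, x2, x3, x4, x5, x6]"
    "{x0, x2} \<in> E"
    "{x1, x6} \<in> E"
    "{x2, x3} \<in> E"
    "{x3, x6} \<in> E"
    "{x4, x5} \<in> E"
    "{x4, x6} \<in> E"
    "{x5, x6} \<in> E"
  shows False
  by (rule obstruct[OF assms(1) chk_9 assms(2)]) (use assms(3-) in simp_all)

lemma chk_10: "chk3 [(0, 1), (0, 2), (1, 3), (2, 4), (3, 5), (4, 6), (5, 7), (6, 7)] 0 [([2, 4], [[6], [2], [6], [2], [2], [2], [2]]), ([1, 3], [[5], [5], [1], [1], [1], [1], [1]]), ([2], [[4], [4], [0], [0], [0], [0], [0]]), ([1], [[3], [3], [0], [0], [0], [0], [0]]), ([2], [[4], [4], [0], [0], [0], [0], [0]]), ([1], [[3], [3], [0], [0], [0], [0], [0]]), ([1], [[3], [3], [0], [0], [0], [0], [0]]), ([1], [[3], [3], [0], [0], [0], [0], [0]])]"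
  by code_simp

lemma obs_10:
  assumes "\<forall>v. herder_wins E v 3" "distinct [x0, x1, x2, x3, x4, x5, x6, x7]"
    "{x0, x1} \<in> E"
    "{x0, x2} \<in> E"
    "{x1, x3} \<in> E"
    "{x2, x4} \<in> E"
    "{x3, x5} \<in> E"
    "{x4, x6} \<in> E"
    "{x5, x7} \<in> E"
    "{x6, x7} \<in> E"
  shows False
  by (rule obstruct[OF assms(1) chk_10 assms(2)]) (use assms(3-) in simp_all)

lemma chk_11: "chk3 [(0, 1), (0, 5), (1, 5), (2, 3), (2, 6), (3, 6), (4, 5), (4, 6)] 4 [([6], [[2], [2], [4], [3], [2], [2], [2]]), ([5], [[4], [4], [1], [1], [1], [1], [1]]), ([5], [[4], [4], [0], [0], [0], [0], [0]]), ([5], [[4], [1], [0], [0], [0], [0], [0]]), ([5], [[4], [1], [0], [0], [0], [0], [0]]), ([5], [[4], [1], [0], [0], [0], [0], [0]]), ([6, 2], [[3], [3], [3], [6], [3], [6], [3]]), ([5, 0], [[5], [1], [5], [1], [1], [1], [1]])]"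
  by code_simp

lemma obs_11:
  assumes "\<forall>v. herder_wins E v 3" "distinct [x0, x1, x2, x3, x4, x5, x6]"
    "{x0, x1} \<in> E"
    "{x0, x5} \<in> E"
    "{x1, x5} \<in> E"
    "{x2, x3} \<in> E"
    "{x2, x6} \<in> E"
    "{x3, x6} \<in> E"
    "{x4, x5} \<in> E"
    "{x4, x6} \<in> E"
  shows False
  by (rule obstruct[OF assms(1) chk_11 assms(2)]) (use assms(3-) in simp_all)

lemma chk_12: "chk3 [(0, 1), (1, 2), (2, 3), (3, 4), (4, 7), (5, 6), (5, 7), (6, 7)] 4 [([3], [[4], [4], [2], [2], [2], [2], [2]]), ([7], [[4], [4], [5], [5], [4], [4], [4]]), ([7], [[4], [4], [5], [5], [4], [4], [4]]), ([7, 5], [[6], [6], [6], [6], [7], [6], [7]]), ([3, 2], [[3], [3], [1], [1], [1], [1], [1]]), ([3], [[2], [4], [4], [2], [2], [2], [2]]), ([3], [[2], [4], [4], [2], [2], [2], [2]]), ([3], [[2], [4], [4], [2], [2], [2], [2]])]"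
  by code_simp

lemma obs_12:
  assumes "\<forall>v. herder_wins E v 3" "distinct [x0, x1, x2, x3, x4, x5, x6, x7]"
    "{x0, x1} \<in> E"
    "{x1, x2} \<in> E"
    "{x2, x3} \<in> E"
    "{x3, x4} \<in> E"
    "{x4, x7} \<in> E"
    "{x5, x6} \<in> E"
    "{x5, x7} \<in> E"
    "{x6, x7} \<in> E"
  shows False
  by (rule obstruct[OF assms(1) chk_12 assms(2)]) (use assms(3-) in simp_all)

lemma chk_13: "chk3 [(0, 2), (1, 3), (2, 4), (3, 5), (4, 6), (5, 7), (6, 8), (7, 8)] 8 [([6], [[4], [8], [4], [8], [8], [4], [4]]), ([6], [[4], [8], [4], [8], [4], [4], [4]]), ([7], [[5], [5], [8], [5], [8], [5], [5]]), ([6], [[4], [4], [8], [8], [4], [4], [4]]), ([7], [[5], [8], [5], [8], [8], [5], [5]]), ([6], [[8], [4], [8], [4], [8], [4], [4]]), ([7, 5], [[3], [7], [3], [7], [3], [3], [3]]), ([6, 4], [[6], [2], [6], [2], [2], [2], [2]])]"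
  by code_simp

lemma obs_13:
  assumes "\<forall>v. herder_wins E v 3" "distinct [x0, x1, x2, x3, x4, x5, x6, x7, x8]"
    "{x0, x2} \<in> E"
    "{x1, x3} \<in> E"
    "{x2, x4} \<in> E"
    "{x3, x5} \<in> E"
    "{x4, x6} \<in> E"
    "{x5, x7} \<in> E"
    "{x6, x8} \<in> E"
    "{x7, x8} \<in> E"
  shows False
  by (rule obstruct[OF assms(1) chk_13 assms(2)]) (use assms(3-) in simp_all)

fun ew :: "'a list \<Rightarrow> 'a set set" where
  "ew [] = {}"
| "ew [x] = {}"
| "ew (x # y # r) = insert {x, y} (ew (y # r))"

definition walk :: "'a set set \<Rightarrow> 'a list \<Rightarrow> bool" where
  "walk E xs \<longleftrightarrow> ew xs \<subseteq> E"

definition cedges :: "'a list \<Rightarrow> 'a set set" where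
  "cedges vs = ew (vs @ [hd vs])"

definition cyc :: "'a set set \<Rightarrow> 'a list \<Rightarrow> bool" where
  "cyc E vs \<longleftrightarrow> 3 \<le> length vs \<and> distinct vs \<and> walk E (vs @ [hd vs])"

lemma ew_append: "ew (xs @ y # ys) = ew (xs @ [y]) \<union> ew (y # ys)"
proof (induction xs rule: ew.induct)
  case 1 then show ?case by simp
next
  case (2 x) then show ?case by simp
next
  case (3 x z r) then show ?case by auto
qed

lemma ew_Cons2: "ew (x # y # r) = insert {x, y} (ew (y # r))" by simp

lemma ew_nth: "ew xs = {{xs ! i, xs ! Suc i} | i. Suc i < length xs}"
proof (induction xs rule: ew.induct)
  case 1 then show ?case by simp
next
  case (2 x) then show ?case by simp
next
  case (3 x y r)
  have "{{(x # y # r) ! i, (x # y # r) ! Suc i} | i. Suc i < length (x # y # r)}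
      = insert {x, y} {{(y # r) ! i, (y # r) ! Suc i} | i. Suc i < length (y # r)}"
    (is "?L = ?R")
  proof
    show "?L \<subseteq> ?R"
    proof
      fix e assume "e \<in> ?L"
      then obtain i where i: "Suc i < length (x # y # r)" "e = {(x # y # r) ! i, (x # y # r) ! Suc i}" by blast
      show "e \<in> ?R"
      proof (cases i)
        case 0 then show ?thesis using i by simp
      next
        case (Suc k) then show ?thesis using i by auto
      qed
    qed
    show "?R \<subseteq> ?L"
    proof
      fix e assume "e \<in> ?R"
      then consider "e = {x, y}" | k where "Suc k < length (y # r)" "e = {(y # r) ! k, (y # r) ! Suc k}" by blast
      then show "e \<in> ?L"
      proof cases
        case 1 then show ?thesis by force
      next
        case 2 then show ?thesis by (intro CollectI exI[of _ "Suc k"]) auto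
      qed
    qed
  qed
  then show ?case using 3 by simp
qed

lemma ew_snoc_mono: "ew xs \<subseteq> ew (xs @ [y])"
  by (induction xs rule: ew.induct) auto

lemma ew_mono_prefix: "ew xs \<subseteq> ew (xs @ ys)"
proof (induction ys arbitrary: xs)
  case Nil then show ?case by simp
next
  case (Cons y ys)
  have "ew xs \<subseteq> ew (xs @ [y])" by (rule ew_snoc_mono)
  also have "\<dots> \<subseteq> ew ((xs @ [y]) @ ys)" by (rule Cons.IH)
  finally show ?case by simp
qed

lemma ew_mono_suffix: "ew ys \<subseteq> ew (xs @ ys)"
proof (cases xs rule: rev_cases)
  case Nil then show ?thesis by simp
next
  case (snoc zs z)
  then show ?thesis
  proof (cases ys)
    case Nil then show ?thesis by simp
  next
    case (Cons y ys')
    have "ew (z # y # ys') \<supseteq> ew (y # ys')" by auto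
    then show ?thesis using snoc Cons ew_append[of "zs" z "y # ys'"] by auto
  qed
qed

lemma walk_prefix: "walk E (xs @ ys) \<Longrightarrow> walk E xs"
  unfolding walk_def using ew_mono_prefix by blast

lemma walk_suffix: "walk E (xs @ ys) \<Longrightarrow> walk E ys"
  unfolding walk_def using ew_mono_suffix by blast

lemma walk_join: "walk E (xs @ [y]) \<Longrightarrow> walk E (y # ys) \<Longrightarrow> walk E (xs @ y # ys)"
  unfolding walk_def using ew_append[of xs y ys] by simp

lemma walk_snoc: "ps \<noteq> [] \<Longrightarrow> walk E ps \<Longrightarrow> {last ps, z} \<in> E \<Longrightarrow> walk E (ps @ [z])"
proof -
  assume a: "ps \<noteq> []" "walk E ps" "{last ps, z} \<in> E"
  then obtain xs where xs: "ps = xs @ [last ps]" by (metis append_butlast_last_id)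
  have "walk E [last ps, z]" using a(3) by (simp add: walk_def)
  then have "walk E (xs @ [last ps] @ [z])" using walk_join[of E xs "last ps" "[z]"] a(2) xs by simp
  then show ?thesis using xs by (metis append.assoc)
qed

lemma cedges_nth:
  assumes "vs \<noteq> []"
  shows "cedges vs = {{vs ! i, vs ! ((i + 1) mod length vs)} | i. i < length vs}"
proof -
  have a: "(vs @ [hd vs]) ! i = vs ! i" if "i < length vs" for i
    using that by (simp add: nth_append)
  have b: "(vs @ [hd vs]) ! Suc i = vs ! ((i + 1) mod length vs)" if "i < length vs" for i
  proof (cases "Suc i < length vs")
    case True then show ?thesis by (simp add: nth_append)
  next
    case False
    then have "Suc i = length vs" using that by simp
    then show ?thesis using assms by (simp add: nth_append hd_conv_nth)
  qed
  show ?thesis unfolding cedges_def ew_nth using a b by force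
qed

lemma is_cycle_cyc: "is_cycle E C \<Longrightarrow> \<exists>vs. cyc E vs \<and> C = cedges vs"
proof -
  assume "is_cycle E C"
  then obtain vs where vs: "length vs \<ge> 3" "distinct vs"
    "\<forall>i<length vs. {vs ! i, vs ! ((i + 1) mod length vs)} \<in> E"
    "C = {{vs ! i, vs ! ((i + 1) mod length vs)} | i. i < length vs}"
    unfolding is_cycle_def by blast
  have ne: "vs \<noteq> []" using vs(1) by auto
  have C: "C = cedges vs" using vs(4) cedges_nth[OF ne] by simp
  have "cedges vs \<subseteq> E" using cedges_nth[OF ne] vs(3) by auto
  then have "cyc E vs" using vs(1,2) unfolding cyc_def walk_def cedges_def by simp
  then show ?thesis using C by blast
qed

lemma cedges_sub: "e \<in> cedges vs \<Longrightarrow> vs \<noteq> [] \<Longrightarrow> e \<subseteq> set vs"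
  using cedges_nth[of vs] by (auto simp: hd_conv_nth)

lemma ew_rot1: "ew (x # xs @ [x]) = ew (xs @ [x] @ [hd (xs @ [x])])"
proof (cases xs)
  case Nil then show ?thesis by simp
next
  case (Cons y ys)
  have "ew (x # y # ys @ [x]) = insert {x, y} (ew (y # ys @ [x]))" by simp
  moreover have "ew (y # ys @ [x] @ [y]) = ew (y # ys @ [x]) \<union> ew [x, y]"
    using ew_append[of "y # ys" x "[y]"] by simp
  ultimately show ?thesis using Cons by (auto simp: insert_commute)
qed

lemma rot1_props: "vs \<noteq> [] \<Longrightarrow> cedges (rotate1 vs) = cedges vs \<and> set (rotate1 vs) = set vs
   \<and> length (rotate1 vs) = length vs \<and> distinct (rotate1 vs) = distinct vs"
proof (cases vs)
  case Nil then show ?thesis by simp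
next
  case (Cons x xs)
  then show ?thesis unfolding cedges_def using ew_rot1[of x xs] by auto
qed

lemma rot_props: "vs \<noteq> [] \<Longrightarrow> cedges (rotate n vs) = cedges vs \<and> set (rotate n vs) = set vs
   \<and> length (rotate n vs) = length vs \<and> distinct (rotate n vs) = distinct vs"
proof (induction n)
  case 0 then show ?case by simp
next
  case (Suc n)
  have "rotate n vs \<noteq> []" using Suc by simp
  then show ?case using Suc rot1_props[of "rotate n vs"] by simp
qed

lemma cyc_walk_iff: "vs \<noteq> [] \<Longrightarrow> walk E (vs @ [hd vs]) \<longleftrightarrow> cedges vs \<subseteq> E"
  unfolding walk_def cedges_def by simp

lemma cyc_rot: "cyc E vs \<Longrightarrow> cyc E (rotate n vs) \<and> cedges (rotate n vs) = cedges vs \<and>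
  set (rotate n vs) = set vs \<and> length (rotate n vs) = length vs"
proof -
  assume c: "cyc E vs"
  then have ne: "vs \<noteq> []" unfolding cyc_def by auto
  note r = rot_props[OF ne, of n]
  have ne2: "rotate n vs \<noteq> []" using ne by simp
  have "cedges vs \<subseteq> E" using c cyc_walk_iff[OF ne] unfolding cyc_def by blast
  then have "walk E (rotate n vs @ [hd (rotate n vs)])" using cyc_walk_iff[OF ne2] r by simp
  then show ?thesis using c r unfolding cyc_def by simp
qed

lemma cyc_rot_to: "cyc E vs \<Longrightarrow> x \<in> set vs \<Longrightarrow> \<exists>vs'. cyc E vs' \<and> cedges vs' = cedges vs \<and>
  set vs' = set vs \<and> length vs' = length vs \<and> hd vs' = x"
proof -
  assume c: "cyc E vs" and x: "x \<in> set vs"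
  then obtain i where i: "i < length vs" "vs ! i = x" by (auto simp: in_set_conv_nth)
  have ne: "rotate i vs \<noteq> []" using i by auto
  have "hd (rotate i vs) = x" using i ne by (simp add: hd_conv_nth nth_rotate)
  then show ?thesis using cyc_rot[OF c, of i] by blast
qed

lemma walk_of_reach: "reach E a b \<Longrightarrow> \<exists>ps. ps \<noteq> [] \<and> hd ps = a \<and> last ps = b \<and> walk E ps"
  unfolding reach_def
proof (induction rule: trancl_induct)
  case (base y)
  then have "{a, y} \<in> E" by simp
  then have "walk E [a, y]" by (simp add: walk_def)
  then show ?case by (intro exI[of _ "[a, y]"]) simp
next
  case (step y z)
  then obtain ps where ps: "ps \<noteq> []" "hd ps = a" "last ps = y" "walk E ps" by blast
  have "{y, z} \<in> E" using step(2) by simp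
  then have "walk E (ps @ [z])" using walk_snoc[OF ps(1,4)] ps(3) by simp
  then show ?case using ps(1,2) by (intro exI[of _ "ps @ [z]"]) simp
qed

lemma good_path:
  assumes "A \<inter> B = {}" "ps \<noteq> []" "hd ps \<in> A" "last ps \<in> B" "walk E ps"
  shows "\<exists>a mid b. a \<in> A \<and> b \<in> B \<and> set mid \<inter> A = {} \<and> set mid \<inter> B = {} \<and>
     distinct (a # mid @ [b]) \<and> walk E (a # mid @ [b])"
  using assms
proof (induction "length ps" arbitrary: ps rule: less_induct)
  case less
  obtain a rest where ar: "ps = a # rest" using less.prems(2) by (cases ps) auto
  have "rest \<noteq> []" using ar less.prems(1,3,4) by auto
  then obtain mid b where mb: "rest = mid @ [b]" by (metis append_butlast_last_id)
  have psf: "ps = a # mid @ [b]" using ar mb by simp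
  have aA: "a \<in> A" and bB: "b \<in> B" using less.prems(3,4) psf by auto
  show ?case
  proof (cases "\<exists>x\<in>set mid. x \<in> A")
    case True
    then obtain m1 x m2 where m: "mid = m1 @ x # m2" "x \<in> A" by (metis split_list)
    let ?ps = "x # m2 @ [b]"
    have "ps = (a # m1) @ ?ps" using psf m by simp
    then have "walk E ?ps" using less.prems(5) walk_suffix by metis
    moreover have "length ?ps < length ps" using psf m by simp
    ultimately show ?thesis using less.hyps[of ?ps] less.prems(1) m(2) bB by auto
  next
    case nA: False
    show ?thesis
    proof (cases "\<exists>x\<in>set mid. x \<in> B")
      case True
      then obtain m1 x m2 where m: "mid = m1 @ x # m2" "x \<in> B" by (metis split_list)
      let ?ps = "a # m1 @ [x]"
      have "ps = ?ps @ (m2 @ [b])" using psf m by simp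
      then have "walk E ?ps" using less.prems(5) walk_prefix by metis
      moreover have "length ?ps < length ps" using psf m by simp
      ultimately show ?thesis using less.hyps[of ?ps] less.prems(1) m(2) aA by auto
    next
      case nB: False
      show ?thesis
      proof (cases "distinct ps")
        case True
        have "set mid \<inter> A = {}" "set mid \<inter> B = {}" using nA nB by auto
        then show ?thesis using aA bB psf less.prems(5) True by (intro exI[of _ a] exI[of _ mid] exI[of _ b]) simp
      next
        case False
        then obtain xs y ys zs where d: "ps = xs @ [y] @ ys @ [y] @ zs"
          using not_distinct_decomp by blast
        let ?ps = "xs @ [y] @ zs"
        have w1: "walk E (xs @ [y])" using less.prems(5) d walk_prefix[of E "xs @ [y]"] by simp
        have w2: "walk E (y # zs)" using less.prems(5) d walk_suffix[of E "xs @ [y] @ ys"] by simp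
        have "walk E ?ps" using walk_join[OF w1 w2] by simp
        moreover have "length ?ps < length ps" using d by simp
        moreover have "hd ?ps = hd ps" using d by (cases xs) auto
        moreover have "last ?ps = last ps" using d by (cases zs rule: rev_cases) auto
        moreover have "?ps \<noteq> []" by simp
        ultimately show ?thesis using less.hyps[of ?ps] less.prems(1,3,4) by simp
      qed
    qed
  qed
qed

lemma obtain0: assumes "length xs = 0" obtains "xs = []"
  using assms by simp

lemma obtain1: assumes "length xs = 1" obtains x0 where "xs = [x0]"
  using assms by (auto simp: length_Suc_conv numeral_eq_Suc)

lemma obtain2: assumes "length xs = 2" obtains x0 x1 where "xs = [x0, x1]"
  using assms by (auto simp: length_Suc_conv numeral_eq_Suc)

lemma obtain3: assumes "length xs = 3" obtains x0 x1 x2 where "xs = [x0, x1, x2]"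
  using assms by (auto simp: length_Suc_conv numeral_eq_Suc)

lemma obtain4: assumes "length xs = 4" obtains x0 x1 x2 x3 where "xs = [x0, x1, x2, x3]"
  using assms by (auto simp: length_Suc_conv numeral_eq_Suc)

lemma obtain5: assumes "length xs = 5" obtains x0 x1 x2 x3 x4 where "xs = [x0, x1, x2, x3, x4]"
  using assms by (auto simp: length_Suc_conv numeral_eq_Suc)

lemma obtain6: assumes "length xs = 6" obtains x0 x1 x2 x3 x4 x5 where "xs = [x0, x1, x2, x3, x4, x5]"
  using assms by (auto simp: length_Suc_conv numeral_eq_Suc)

lemma obtain7: assumes "length xs = 7" obtains x0 x1 x2 x3 x4 x5 x6 where "xs = [x0, x1, x2, x3, x4, x5, x6]"
  using assms by (auto simp: length_Suc_conv numeral_eq_Suc)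

lemma obtain8: assumes "length xs = 8" obtains x0 x1 x2 x3 x4 x5 x6 x7 where "xs = [x0, x1, x2, x3, x4, x5, x6, x7]"
  using assms by (auto simp: length_Suc_conv numeral_eq_Suc)

lemma obtain9: assumes "length xs = 9" obtains x0 x1 x2 x3 x4 x5 x6 x7 x8 where "xs = [x0, x1, x2, x3, x4, x5, x6, x7, x8]"
  using assms by (auto simp: length_Suc_conv numeral_eq_Suc)

lemma two_hd: "2 \<le> length xs \<Longrightarrow> \<exists>a b rest. xs = a # b # rest"
  by (cases xs; cases "tl xs") auto

lemma hw3_of:
  assumes sg: "simple_graph V E" and cn: "cat_num V E = 3"
  shows "\<forall>v. herder_wins E v 3"
proof
  fix v
  have fV: "finite V" using sg unfolding simple_graph_def by simp
  have EV: "\<And>e. e \<in> E \<Longrightarrow> e \<subseteq> V" using sg unfolding simple_graph_def by fastforce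
  have "E \<subseteq> Pow V" using EV by blast
  moreover have "finite (Pow V)" using fV by simp
  ultimately have fE: "finite E" by (rule finite_subset)
  show "herder_wins E v 3"
  proof (cases "v \<in> V")
    case True
    have ex: "herder_wins E v (card E)" using hw_card[OF fE] .
    have "cat_at E v \<le> Max ((\<lambda>v. cat_at E v) ` V)"
      by (rule Max_ge[OF finite_imageI[OF fV] imageI[OF True]])
    then have le: "cat_at E v \<le> 3" using cn unfolding cat_num_def by simp
    have "herder_wins E v (cat_at E v)" unfolding cat_at_def by (rule LeastI[of "\<lambda>k. herder_wins E v k", OF ex])
    then show ?thesis by (rule hw_mono[OF _ le])
  next
    case False
    have "isolated E v" unfolding isolated_def
    proof
      fix e assume "e \<in> E"
      then have "e \<subseteq> V" by (rule EV)
      then show "v \<notin> e" using False by blast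
    qed
    then show ?thesis by (rule herder_wins.captured)
  qed
qed

lemma two_cycles:
  assumes "\<exists>C1 C2. is_cycle E C1 \<and> is_cycle E C2 \<and> C1 \<noteq> C2"
  shows "\<exists>vs ws. cyc E vs \<and> cyc E ws \<and> \<not> cedges ws \<subseteq> cedges vs"
proof -
  obtain C1 C2 where c: "is_cycle E C1" "is_cycle E C2" "C1 \<noteq> C2" using assms by blast
  obtain vs1 where v1: "cyc E vs1" "C1 = cedges vs1" using is_cycle_cyc[OF c(1)] by blast
  obtain vs2 where v2: "cyc E vs2" "C2 = cedges vs2" using is_cycle_cyc[OF c(2)] by blast
  show ?thesis
  proof (cases "cedges vs2 \<subseteq> cedges vs1")
    case True
    then have "\<not> cedges vs1 \<subseteq> cedges vs2" using c(3) v1 v2 by blast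
    then show ?thesis using v1 v2 by blast
  next
    case False then show ?thesis using v1 v2 by blast
  qed
qed

lemma EV: "simple_graph V E \<Longrightarrow> e \<in> E \<Longrightarrow> e \<subseteq> V"
  unfolding simple_graph_def by fastforce

lemma cyc_V: assumes "simple_graph V E" "cyc E vs" shows "set vs \<subseteq> V"
proof
  fix z assume z: "z \<in> set vs"
  then obtain i where i: "i < length vs" "vs ! i = z" by (auto simp: in_set_conv_nth)
  have ne: "vs \<noteq> []" using i by auto
  have "{vs ! i, vs ! ((i+1) mod length vs)} \<in> cedges vs" using cedges_nth[OF ne] i by blast
  moreover have "cedges vs \<subseteq> E" using assms(2) cyc_walk_iff[OF ne] unfolding cyc_def by blast
  ultimately have "{z, vs ! ((i+1) mod length vs)} \<in> E" using i by auto
  then have "{z, vs ! ((i+1) mod length vs)} \<subseteq> V" using EV[OF assms(1)] by blast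
  then show "z \<in> V" by simp
qed

lemma crossing_aux:
  assumes "(p, y) \<in> {(x, y). x \<noteq> y \<and> {x, y} \<in> E}\<^sup>+"
  shows "p \<in> S \<longrightarrow> y \<notin> S \<longrightarrow> (\<exists>p'\<in>S. \<exists>q'. q' \<notin> S \<and> {p', q'} \<in> E)"
  using assms
proof (induction rule: trancl_induct)
  case (base y) then show ?case by blast
next
  case (step y z)
  show ?case
  proof (cases "y \<in> S")
    case True then show ?thesis using step(2) by blast
  next
    case False then show ?thesis using step(3) by blast
  qed
qed

lemma crossing:
  assumes "connected_graph V E" "p \<in> S" "q \<in> V" "q \<notin> S" "S \<subseteq> V"
  shows "\<exists>p'\<in>S. \<exists>q'. q' \<notin> S \<and> {p', q'} \<in> E"
proof -
  have "p = q \<or> reach E p q" using assms unfolding connected_graph_def by blast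
  then have "reach E p q" using assms by auto
  then show ?thesis using crossing_aux[of p q E S] assms unfolding reach_def by blast
qed

lemma path_obs:
  assumes hw3: "\<forall>v. herder_wins E v 3" and wk: "walk E zs" and d: "distinct zs" and l: "9 \<le> length zs"
  shows False
proof -
  have l9: "length (take 9 zs) = 9" using l by simp
  obtain z0 z1 z2 z3 z4 z5 z6 z7 z8 where Z: "take 9 zs = [z0, z1, z2, z3, z4, z5, z6, z7, z8]" by (rule obtain9[OF l9])
  have "walk E (take 9 zs)" using wk walk_prefix[of E "take 9 zs" "drop 9 zs"] by simp
  then have EF: "{z0, z1} \<in> E" "{z1, z2} \<in> E" "{z2, z3} \<in> E" "{z3, z4} \<in> E" "{z4, z5} \<in> E" "{z5, z6} \<in> E" "{z6, z7} \<in> E" "{z7, z8} \<in> E" using Z by (simp_all add: walk_def)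
  have "distinct (take 9 zs)" using d by simp
  then have D: "distinct [z0, z1, z2, z3, z4, z5, z6, z7, z8]" using Z by simp
  show False
    by (rule obs_13[OF hw3, of z0 z8 z1 z7 z2 z6 z3 z5 z4]) (use D EF in \<open>auto simp: insert_commute\<close>)
qed

lemma cyc_len:
  assumes hw3: "\<forall>v. herder_wins E v 3" and c: "cyc E vs"
  shows "length vs \<le> 5"
proof (rule ccontr)
  assume "\<not> length vs \<le> 5"
  then have "length vs = 6 \<or> length vs = 7 \<or> length vs = 8 \<or> 9 \<le> length vs" by linarith
  then show False
  proof (elim disjE)
    assume L: "length vs = 6"
    obtain v0 v1 v2 v3 v4 v5 where V: "vs = [v0, v1, v2, v3, v4, v5]" by (rule obtain6[OF L])
    have D: "distinct [v0, v1, v2, v3, v4, v5]" and EF: "{v0, v1} \<in> E" "{v1, v2} \<in> E" "{v2, v3} \<in> E" "{v3, v4} \<in> E" "{v4, v5} \<in> E" "{v5, v0} \<in> E"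
      using c V by (simp_all add: cyc_def walk_def)
    show False
      by (rule obs_1[OF hw3, of v0 v1 v5 v2 v4 v3]) (use D EF in \<open>auto simp: insert_commute\<close>)
  next
    assume L: "length vs = 7"
    obtain v0 v1 v2 v3 v4 v5 v6 where V: "vs = [v0, v1, v2, v3, v4, v5, v6]" by (rule obtain7[OF L])
    have D: "distinct [v0, v1, v2, v3, v4, v5, v6]" and EF: "{v0, v1} \<in> E" "{v1, v2} \<in> E" "{v2, v3} \<in> E" "{v3, v4} \<in> E" "{v4, v5} \<in> E" "{v5, v6} \<in> E" "{v6, v0} \<in> E"
      using c V by (simp_all add: cyc_def walk_def)
    show False
      by (rule obs_8[OF hw3, of v0 v1 v6 v2 v5 v3 v4]) (use D EF in \<open>auto simp: insert_commute\<close>)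
  next
    assume L: "length vs = 8"
    obtain v0 v1 v2 v3 v4 v5 v6 v7 where V: "vs = [v0, v1, v2, v3, v4, v5, v6, v7]" by (rule obtain8[OF L])
    have D: "distinct [v0, v1, v2, v3, v4, v5, v6, v7]" and EF: "{v0, v1} \<in> E" "{v1, v2} \<in> E" "{v2, v3} \<in> E" "{v3, v4} \<in> E" "{v4, v5} \<in> E" "{v5, v6} \<in> E" "{v6, v7} \<in> E" "{v7, v0} \<in> E"
      using c V by (simp_all add: cyc_def walk_def)
    show False
      by (rule obs_10[OF hw3, of v0 v1 v7 v2 v6 v3 v5 v4]) (use D EF in \<open>auto simp: insert_commute\<close>)
  next
    assume L: "9 \<le> length vs"
    have "walk E vs" using c walk_prefix unfolding cyc_def by blast
    then show False using path_obs[OF hw3] c L unfolding cyc_def by blast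
  qed
qed

lemma shared_case:
  assumes hw3: "\<forall>v. herder_wins E v 3"
    and cv: "cyc E vs" and cw: "cyc E ws" and nsub: "\<not> cedges ws \<subseteq> cedges vs"
    and sh: "set ws \<inter> set vs \<noteq> {}" and lv: "length vs \<le> 5" and lw: "length ws \<le> 5"
  shows False
proof -
  have wsne: "ws \<noteq> []" using cw unfolding cyc_def by auto
  have vsne: "vs \<noteq> []" using cv unfolding cyc_def by auto
  obtain e where e: "e \<in> cedges ws" "e \<notin> cedges vs" using nsub by blast
  obtain i where i: "i < length ws" "e = {ws ! i, ws ! ((i + 1) mod length ws)}"
    using e(1) cedges_nth[OF wsne] by blast
  define r where "r = rotate i ws"
  have rp: "cyc E r" "length r = length ws" "set r = set ws" using cyc_rot[OF cw, of i] r_def by auto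
  have l3: "3 \<le> length ws" using cw unfolding cyc_def by simp
  have "r ! 0 = ws ! ((i + 0) mod length ws)" unfolding r_def by (rule nth_rotate) (use wsne in simp)
  then have r0: "r ! 0 = ws ! i" using i(1) by simp
  have r1: "r ! 1 = ws ! ((i + 1) mod length ws)" unfolding r_def by (rule nth_rotate) (use l3 in simp)
  have rbad: "{r ! 0, r ! 1} \<notin> cedges vs" using e i r0 r1 by simp
  have "\<exists>x y rest. cyc E (x # y # rest) \<and> length (x # y # rest) = length ws \<and> x \<in> set vs \<and> {x, y} \<notin> cedges vs"
  proof -
    obtain a b rest where R: "r = a # b # rest" using two_hd[of r] rp(2) l3 by auto
    show ?thesis
    proof (cases "a \<in> set vs")
      case True then show ?thesis using rp R rbad by auto
    next
      case False
      have "\<exists>z\<in>set r. z \<in> set vs" using sh rp(3) by auto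
      then obtain ys x zs where S: "r = ys @ x # zs" "x \<in> set vs" "\<forall>z\<in>set zs. z \<notin> set vs"
        using split_list_last_prop[of r "\<lambda>z. z \<in> set vs"] by blast
      have ysne: "ys \<noteq> []" using S R False by (cases ys) auto
      define w where "w = x # zs @ ys"
      have wr: "w = rotate (length ys) r" using S unfolding w_def by (simp add: rotate_append)
      have wp: "cyc E w" "length w = length ws" using cyc_rot[OF rp(1), of "length ys"] wr rp(2) by auto
      obtain y rest' where W: "w = x # y # rest'" and yn: "y \<notin> set vs"
      proof (cases zs)
        case Nil
        then have "w = x # hd ys # tl ys" using ysne w_def by simp
        moreover have "hd ys = a" using R S ysne by (cases ys) auto
        ultimately show ?thesis using that False by blast
      next
        case (Cons z zs')
        then show ?thesis using that S(3) w_def by auto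
      qed
      have "{x, y} \<notin> cedges vs"
      proof
        assume "{x, y} \<in> cedges vs"
        then have "{x, y} \<subseteq> set vs" using cedges_sub vsne by blast
        then show False using yn by simp
      qed
      then show ?thesis using wp W S(2) by blast
    qed
  qed
  then obtain x y rest where W: "cyc E (x # y # rest)" "length (x # y # rest) = length ws"
    "x \<in> set vs" "{x, y} \<notin> cedges vs" by blast
  have "\<exists>z\<in>set (y # rest @ [x]). z \<in> set vs" using W(3) by auto
  then obtain ys t zs where S: "y # rest @ [x] = ys @ t # zs" "t \<in> set vs" "\<forall>z\<in>set ys. z \<notin> set vs"
    using split_list_first_prop[of "y # rest @ [x]" "\<lambda>z. z \<in> set vs"] by blast
  have dw: "distinct (x # y # rest)" using W(1) unfolding cyc_def by simp
  have dl0: "distinct (y # rest @ [x])" using dw by auto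
  then have dl: "distinct (ys @ t # zs)" using S(1) by simp
  have "walk E ((x # y # rest) @ [x])" using W(1) unfolding cyc_def by simp
  moreover have "(x # y # rest) @ [x] = (x # ys @ [t]) @ zs" using S(1) by simp
  ultimately have ear: "walk E (x # ys @ [t])" using walk_prefix by metis
  have xys: "x \<notin> set ys" using S(3) W(3) by blast
  have "length (y # rest @ [x]) = length (ys @ t # zs)" using S(1) by simp
  then have lys: "length ys + 1 + length zs = length ws" using W(2) by simp
  have c1: "t = x \<Longrightarrow> 2 \<le> length ys"
  proof -
    assume tx: "t = x"
    have "zs = []"
    proof (rule ccontr)
      assume zn: "zs \<noteq> []"
      have "last (y # rest @ [x]) = last (ys @ t # zs)" using S(1) by simp
      then have "x = last zs" using zn by simp
      then have "x \<in> set zs" using zn by simp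
      then show False using dl tx by simp
    qed
    then have "length ys + 1 = length ws" using lys by simp
    then show ?thesis using l3 by simp
  qed
  have c2: "ys = [] \<Longrightarrow> {x, t} \<notin> cedges vs" using S(1) W(4) by auto
  have lys4: "length ys \<le> 4" using lys lw by simp
  obtain vs' where V: "cyc E vs'" "cedges vs' = cedges vs" "set vs' = set vs"
    "length vs' = length vs" "hd vs' = x"
    using cyc_rot_to[OF cv W(3)] by blast
  have tv: "t \<in> set vs'" using S(2) V(3) by simp
  have ysn: "\<forall>z\<in>set ys. z \<notin> set vs'" using S(3) V(3) by simp
  have dys: "distinct ys" using dl by simp
  have c2': "ys = [] \<Longrightarrow> {x, t} \<notin> cedges vs'" using c2 V(2) by simp
  have lv3: "3 \<le> length vs'" using V(1) unfolding cyc_def by simp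
  have lv5: "length vs' \<le> 5" using V(4) lv by simp
  have "length vs' = 3 \<or> length vs' = 4 \<or> length vs' = 5" using lv3 lv5 by linarith
  then show False
  proof (elim disjE)
    assume L: "length vs' = 3"
    obtain v0 v1 v2 where VV: "vs' = [v0, v1, v2]" by (rule obtain3[OF L])
    have x0: "x = v0" using V(5) VV by simp
    have CF: "distinct [v0, v1, v2]" "{v0, v1} \<in> E" "{v1, v2} \<in> E" "{v2, v0} \<in> E" using V(1) VV by (simp_all add: cyc_def walk_def)
    have CE: "cedges vs' = {{v0, v1}, {v1, v2}, {v2, v0}}" using VV by (simp add: cedges_def)
    have "length ys = 0 \<or> length ys = 1 \<or> length ys = 2 \<or> length ys = 3 \<or> length ys = 4" using lys4 by linarith
    then show False
    proof (elim disjE)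
      assume J: "length ys = 0"
      have YY: "ys = []" using J by simp
      have D: "distinct [v0, v1, v2]" using CF(1) dys ysn xys YY VV by auto
      have "t = v0 \<or> t = v1 \<or> t = v2" using tv VV by simp
      then show False
      proof (elim disjE)
        assume T: "t = v0"
        have EF: "{v0, v0} \<in> E" using ear x0 YY T by (simp_all add: walk_def)
        show False using c1 T x0 J by simp
      next
        assume T: "t = v1"
        have EF: "{v0, v1} \<in> E" using ear x0 YY T by (simp_all add: walk_def)
        show False using c2' YY T x0 CE by (auto simp: insert_commute)
      next
        assume T: "t = v2"
        have EF: "{v0, v2} \<in> E" using ear x0 YY T by (simp_all add: walk_def)
        show False using c2' YY T x0 CE by (auto simp: insert_commute)
      qed
    next
      assume J: "length ys = 1"
      obtain y0 where YY: "ys = [y0]" by (rule obtain1[OF J])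
      have D: "distinct [v0, v1, v2, y0]" using CF(1) dys ysn xys YY VV by auto
      have "t = v0 \<or> t = v1 \<or> t = v2" using tv VV by simp
      then show False
      proof (elim disjE)
        assume T: "t = v0"
        have EF: "{v0, y0} \<in> E" "{y0, v0} \<in> E" using ear x0 YY T by (simp_all add: walk_def)
        show False using c1 T x0 J by simp
      next
        assume T: "t = v1"
        have EF: "{v0, y0} \<in> E" "{y0, v1} \<in> E" using ear x0 YY T by (simp_all add: walk_def)
        show False
          by (rule obs_0[OF hw3, of v2 y0 v0 v1]) (use D CF EF in \<open>auto simp: insert_commute\<close>)
      next
        assume T: "t = v2"
        have EF: "{v0, y0} \<in> E" "{y0, v2} \<in> E" using ear x0 YY T by (simp_all add: walk_def)
        show False
          by (rule obs_0[OF hw3, of v1 y0 v0 v2]) (use D CF EF in \<open>auto simp: insert_commute\<close>)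
      qed
    next
      assume J: "length ys = 2"
      obtain y0 y1 where YY: "ys = [y0, y1]" by (rule obtain2[OF J])
      have D: "distinct [v0, v1, v2, y0, y1]" using CF(1) dys ysn xys YY VV by auto
      have "t = v0 \<or> t = v1 \<or> t = v2" using tv VV by simp
      then show False
      proof (elim disjE)
        assume T: "t = v0"
        have EF: "{v0, y0} \<in> E" "{y0, y1} \<in> E" "{y1, v0} \<in> E" using ear x0 YY T by (simp_all add: walk_def)
        show False
          by (rule obs_3[OF hw3, of v1 v2 y0 y1 v0]) (use D CF EF in \<open>auto simp: insert_commute\<close>)
      next
        assume T: "t = v1"
        have EF: "{v0, y0} \<in> E" "{y0, y1} \<in> E" "{y1, v1} \<in> E" using ear x0 YY T by (simp_all add: walk_def)
        show False
          by (rule obs_2[OF hw3, of y0 y1 v2 v0 v1]) (use D CF EF in \<open>auto simp: insert_commute\<close>)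
      next
        assume T: "t = v2"
        have EF: "{v0, y0} \<in> E" "{y0, y1} \<in> E" "{y1, v2} \<in> E" using ear x0 YY T by (simp_all add: walk_def)
        show False
          by (rule obs_2[OF hw3, of y0 y1 v1 v0 v2]) (use D CF EF in \<open>auto simp: insert_commute\<close>)
      qed
    next
      assume J: "length ys = 3"
      obtain y0 y1 y2 where YY: "ys = [y0, y1, y2]" by (rule obtain3[OF J])
      have D: "distinct [v0, v1, v2, y0, y1, y2]" using CF(1) dys ysn xys YY VV by auto
      have "t = v0 \<or> t = v1 \<or> t = v2" using tv VV by simp
      then show False
      proof (elim disjE)
        assume T: "t = v0"
        have EF: "{v0, y0} \<in> E" "{y0, y1} \<in> E" "{y1, y2} \<in> E" "{y2, v0} \<in> E" using ear x0 YY T by (simp_all add: walk_def)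
        show False
          by (rule obs_4[OF hw3, of v1 v2 y1 y0 y2 v0]) (use D CF EF in \<open>auto simp: insert_commute\<close>)
      next
        assume T: "t = v1"
        have EF: "{v0, y0} \<in> E" "{y0, y1} \<in> E" "{y1, y2} \<in> E" "{y2, v1} \<in> E" using ear x0 YY T by (simp_all add: walk_def)
        show False
          by (rule obs_1[OF hw3, of v0 v2 y0 v1 y1 y2]) (use D CF EF in \<open>auto simp: insert_commute\<close>)
      next
        assume T: "t = v2"
        have EF: "{v0, y0} \<in> E" "{y0, y1} \<in> E" "{y1, y2} \<in> E" "{y2, v2} \<in> E" using ear x0 YY T by (simp_all add: walk_def)
        show False
          by (rule obs_7[OF hw3, of v1 y0 y1 v0 y2 v2]) (use D CF EF in \<open>auto simp: insert_commute\<close>)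
      qed
    next
      assume J: "length ys = 4"
      obtain y0 y1 y2 y3 where YY: "ys = [y0, y1, y2, y3]" by (rule obtain4[OF J])
      have D: "distinct [v0, v1, v2, y0, y1, y2, y3]" using CF(1) dys ysn xys YY VV by auto
      have "t = v0 \<or> t = v1 \<or> t = v2" using tv VV by simp
      then show False
      proof (elim disjE)
        assume T: "t = v0"
        have EF: "{v0, y0} \<in> E" "{y0, y1} \<in> E" "{y1, y2} \<in> E" "{y2, y3} \<in> E" "{y3, v0} \<in> E" using ear x0 YY T by (simp_all add: walk_def)
        show False
          by (rule obs_7[OF hw3, of v2 y1 y2 y0 y3 v0]) (use D CF EF in \<open>auto simp: insert_commute\<close>)
      next
        assume T: "t = v1"
        have EF: "{v0, y0} \<in> E" "{y0, y1} \<in> E" "{y1, y2} \<in> E" "{y2, y3} \<in> E" "{y3, v1} \<in> E" using ear x0 YY T by (simp_all add: walk_def)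
        show False
          by (rule obs_8[OF hw3, of v0 v2 y0 v1 y1 y3 y2]) (use D CF EF in \<open>auto simp: insert_commute\<close>)
      next
        assume T: "t = v2"
        have EF: "{v0, y0} \<in> E" "{y0, y1} \<in> E" "{y1, y2} \<in> E" "{y2, y3} \<in> E" "{y3, v2} \<in> E" using ear x0 YY T by (simp_all add: walk_def)
        show False
          by (rule obs_1[OF hw3, of v0 v2 y0 y3 y1 y2]) (use D CF EF in \<open>auto simp: insert_commute\<close>)
      qed
    qed
  next
    assume L: "length vs' = 4"
    obtain v0 v1 v2 v3 where VV: "vs' = [v0, v1, v2, v3]" by (rule obtain4[OF L])
    have x0: "x = v0" using V(5) VV by simp
    have CF: "distinct [v0, v1, v2, v3]" "{v0, v1} \<in> E" "{v1, v2} \<in> E" "{v2, v3} \<in> E" "{v3, v0} \<in> E" using V(1) VV by (simp_all add: cyc_def walk_def)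
    have CE: "cedges vs' = {{v0, v1}, {v1, v2}, {v2, v3}, {v3, v0}}" using VV by (simp add: cedges_def)
    have "length ys = 0 \<or> length ys = 1 \<or> length ys = 2 \<or> length ys = 3 \<or> length ys = 4" using lys4 by linarith
    then show False
    proof (elim disjE)
      assume J: "length ys = 0"
      have YY: "ys = []" using J by simp
      have D: "distinct [v0, v1, v2, v3]" using CF(1) dys ysn xys YY VV by auto
      have "t = v0 \<or> t = v1 \<or> t = v2 \<or> t = v3" using tv VV by simp
      then show False
      proof (elim disjE)
        assume T: "t = v0"
        have EF: "{v0, v0} \<in> E" using ear x0 YY T by (simp_all add: walk_def)
        show False using c1 T x0 J by simp
      next
        assume T: "t = v1"
        have EF: "{v0, v1} \<in> E" using ear x0 YY T by (simp_all add: walk_def)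
        show False using c2' YY T x0 CE by (auto simp: insert_commute)
      next
        assume T: "t = v2"
        have EF: "{v0, v2} \<in> E" using ear x0 YY T by (simp_all add: walk_def)
        show False
          by (rule obs_0[OF hw3, of v1 v3 v0 v2]) (use D CF EF in \<open>auto simp: insert_commute\<close>)
      next
        assume T: "t = v3"
        have EF: "{v0, v3} \<in> E" using ear x0 YY T by (simp_all add: walk_def)
        show False using c2' YY T x0 CE by (auto simp: insert_commute)
      qed
    next
      assume J: "length ys = 1"
      obtain y0 where YY: "ys = [y0]" by (rule obtain1[OF J])
      have D: "distinct [v0, v1, v2, v3, y0]" using CF(1) dys ysn xys YY VV by auto
      have "t = v0 \<or> t = v1 \<or> t = v2 \<or> t = v3" using tv VV by simp
      then show False
      proof (elim disjE)
        assume T: "t = v0"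
        have EF: "{v0, y0} \<in> E" "{y0, v0} \<in> E" using ear x0 YY T by (simp_all add: walk_def)
        show False using c1 T x0 J by simp
      next
        assume T: "t = v1"
        have EF: "{v0, y0} \<in> E" "{y0, v1} \<in> E" using ear x0 YY T by (simp_all add: walk_def)
        show False
          by (rule obs_2[OF hw3, of v2 v3 y0 v1 v0]) (use D CF EF in \<open>auto simp: insert_commute\<close>)
      next
        assume T: "t = v2"
        have EF: "{v0, y0} \<in> E" "{y0, v2} \<in> E" using ear x0 YY T by (simp_all add: walk_def)
        show False
          by (rule obs_6[OF hw3, of v1 v3 y0 v0 v2]) (use D CF EF in \<open>auto simp: insert_commute\<close>)
      next
        assume T: "t = v3"
        have EF: "{v0, y0} \<in> E" "{y0, v3} \<in> E" using ear x0 YY T by (simp_all add: walk_def)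
        show False
          by (rule obs_2[OF hw3, of v1 v2 y0 v0 v3]) (use D CF EF in \<open>auto simp: insert_commute\<close>)
      qed
    next
      assume J: "length ys = 2"
      obtain y0 y1 where YY: "ys = [y0, y1]" by (rule obtain2[OF J])
      have D: "distinct [v0, v1, v2, v3, y0, y1]" using CF(1) dys ysn xys YY VV by auto
      have "t = v0 \<or> t = v1 \<or> t = v2 \<or> t = v3" using tv VV by simp
      then show False
      proof (elim disjE)
        assume T: "t = v0"
        have EF: "{v0, y0} \<in> E" "{y0, y1} \<in> E" "{y1, v0} \<in> E" using ear x0 YY T by (simp_all add: walk_def)
        show False
          by (rule obs_4[OF hw3, of y0 y1 v2 v1 v3 v0]) (use D CF EF in \<open>auto simp: insert_commute\<close>)
      next
        assume T: "t = v1"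
        have EF: "{v0, y0} \<in> E" "{y0, y1} \<in> E" "{y1, v1} \<in> E" using ear x0 YY T by (simp_all add: walk_def)
        show False
          by (rule obs_1[OF hw3, of v0 v3 y0 v2 y1 v1]) (use D CF EF in \<open>auto simp: insert_commute\<close>)
      next
        assume T: "t = v2"
        have EF: "{v0, y0} \<in> E" "{y0, y1} \<in> E" "{y1, v2} \<in> E" using ear x0 YY T by (simp_all add: walk_def)
        show False
          by (rule obs_7[OF hw3, of v1 v0 y0 v3 y1 v2]) (use D CF EF in \<open>auto simp: insert_commute\<close>)
      next
        assume T: "t = v3"
        have EF: "{v0, y0} \<in> E" "{y0, y1} \<in> E" "{y1, v3} \<in> E" using ear x0 YY T by (simp_all add: walk_def)
        show False
          by (rule obs_4[OF hw3, of v1 v2 y0 v0 y1 v3]) (use D CF EF in \<open>auto simp: insert_commute\<close>)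
      qed
    next
      assume J: "length ys = 3"
      obtain y0 y1 y2 where YY: "ys = [y0, y1, y2]" by (rule obtain3[OF J])
      have D: "distinct [v0, v1, v2, v3, y0, y1, y2]" using CF(1) dys ysn xys YY VV by auto
      have "t = v0 \<or> t = v1 \<or> t = v2 \<or> t = v3" using tv VV by simp
      then show False
      proof (elim disjE)
        assume T: "t = v0"
        have EF: "{v0, y0} \<in> E" "{y0, y1} \<in> E" "{y1, y2} \<in> E" "{y2, v0} \<in> E" using ear x0 YY T by (simp_all add: walk_def)
        show False
          by (rule obs_4[OF hw3, of v2 v3 y1 y0 y2 v0]) (use D CF EF in \<open>auto simp: insert_commute\<close>)
      next
        assume T: "t = v1"
        have EF: "{v0, y0} \<in> E" "{y0, y1} \<in> E" "{y1, y2} \<in> E" "{y2, v1} \<in> E" using ear x0 YY T by (simp_all add: walk_def)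
        show False
          by (rule obs_8[OF hw3, of v0 v3 y0 v2 y1 v1 y2]) (use D CF EF in \<open>auto simp: insert_commute\<close>)
      next
        assume T: "t = v2"
        have EF: "{v0, y0} \<in> E" "{y0, y1} \<in> E" "{y1, y2} \<in> E" "{y2, v2} \<in> E" using ear x0 YY T by (simp_all add: walk_def)
        show False
          by (rule obs_1[OF hw3, of v0 v3 y0 v2 y1 y2]) (use D CF EF in \<open>auto simp: insert_commute\<close>)
      next
        assume T: "t = v3"
        have EF: "{v0, y0} \<in> E" "{y0, y1} \<in> E" "{y1, y2} \<in> E" "{y2, v3} \<in> E" using ear x0 YY T by (simp_all add: walk_def)
        show False
          by (rule obs_7[OF hw3, of v2 y0 y1 v0 y2 v3]) (use D CF EF in \<open>auto simp: insert_commute\<close>)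
      qed
    next
      assume J: "length ys = 4"
      obtain y0 y1 y2 y3 where YY: "ys = [y0, y1, y2, y3]" by (rule obtain4[OF J])
      have D: "distinct [v0, v1, v2, v3, y0, y1, y2, y3]" using CF(1) dys ysn xys YY VV by auto
      have "t = v0 \<or> t = v1 \<or> t = v2 \<or> t = v3" using tv VV by simp
      then show False
      proof (elim disjE)
        assume T: "t = v0"
        have EF: "{v0, y0} \<in> E" "{y0, y1} \<in> E" "{y1, y2} \<in> E" "{y2, y3} \<in> E" "{y3, v0} \<in> E" using ear x0 YY T by (simp_all add: walk_def)
        show False
          by (rule obs_7[OF hw3, of v3 y1 y2 y0 y3 v0]) (use D CF EF in \<open>auto simp: insert_commute\<close>)
      next
        assume T: "t = v1"
        have EF: "{v0, y0} \<in> E" "{y0, y1} \<in> E" "{y1, y2} \<in> E" "{y2, y3} \<in> E" "{y3, v1} \<in> E" using ear x0 YY T by (simp_all add: walk_def)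
        show False
          by (rule obs_10[OF hw3, of v0 v3 y0 v2 y1 v1 y2 y3]) (use D CF EF in \<open>auto simp: insert_commute\<close>)
      next
        assume T: "t = v2"
        have EF: "{v0, y0} \<in> E" "{y0, y1} \<in> E" "{y1, y2} \<in> E" "{y2, y3} \<in> E" "{y3, v2} \<in> E" using ear x0 YY T by (simp_all add: walk_def)
        show False
          by (rule obs_8[OF hw3, of v0 v3 y0 v2 y1 y3 y2]) (use D CF EF in \<open>auto simp: insert_commute\<close>)
      next
        assume T: "t = v3"
        have EF: "{v0, y0} \<in> E" "{y0, y1} \<in> E" "{y1, y2} \<in> E" "{y2, y3} \<in> E" "{y3, v3} \<in> E" using ear x0 YY T by (simp_all add: walk_def)
        show False
          by (rule obs_1[OF hw3, of v0 v3 y0 y3 y1 y2]) (use D CF EF in \<open>auto simp: insert_commute\<close>)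
      qed
    qed
  next
    assume L: "length vs' = 5"
    obtain v0 v1 v2 v3 v4 where VV: "vs' = [v0, v1, v2, v3, v4]" by (rule obtain5[OF L])
    have x0: "x = v0" using V(5) VV by simp
    have CF: "distinct [v0, v1, v2, v3, v4]" "{v0, v1} \<in> E" "{v1, v2} \<in> E" "{v2, v3} \<in> E" "{v3, v4} \<in> E" "{v4, v0} \<in> E" using V(1) VV by (simp_all add: cyc_def walk_def)
    have CE: "cedges vs' = {{v0, v1}, {v1, v2}, {v2, v3}, {v3, v4}, {v4, v0}}" using VV by (simp add: cedges_def)
    have "length ys = 0 \<or> length ys = 1 \<or> length ys = 2 \<or> length ys = 3 \<or> length ys = 4" using lys4 by linarith
    then show False
    proof (elim disjE)
      assume J: "length ys = 0"
      have YY: "ys = []" using J by simp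
      have D: "distinct [v0, v1, v2, v3, v4]" using CF(1) dys ysn xys YY VV by auto
      have "t = v0 \<or> t = v1 \<or> t = v2 \<or> t = v3 \<or> t = v4" using tv VV by simp
      then show False
      proof (elim disjE)
        assume T: "t = v0"
        have EF: "{v0, v0} \<in> E" using ear x0 YY T by (simp_all add: walk_def)
        show False using c1 T x0 J by simp
      next
        assume T: "t = v1"
        have EF: "{v0, v1} \<in> E" using ear x0 YY T by (simp_all add: walk_def)
        show False using c2' YY T x0 CE by (auto simp: insert_commute)
      next
        assume T: "t = v2"
        have EF: "{v0, v2} \<in> E" using ear x0 YY T by (simp_all add: walk_def)
        show False
          by (rule obs_2[OF hw3, of v3 v4 v1 v2 v0]) (use D CF EF in \<open>auto simp: insert_commute\<close>)
      next
        assume T: "t = v3"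
        have EF: "{v0, v3} \<in> E" using ear x0 YY T by (simp_all add: walk_def)
        show False
          by (rule obs_2[OF hw3, of v1 v2 v4 v0 v3]) (use D CF EF in \<open>auto simp: insert_commute\<close>)
      next
        assume T: "t = v4"
        have EF: "{v0, v4} \<in> E" using ear x0 YY T by (simp_all add: walk_def)
        show False using c2' YY T x0 CE by (auto simp: insert_commute)
      qed
    next
      assume J: "length ys = 1"
      obtain y0 where YY: "ys = [y0]" by (rule obtain1[OF J])
      have D: "distinct [v0, v1, v2, v3, v4, y0]" using CF(1) dys ysn xys YY VV by auto
      have "t = v0 \<or> t = v1 \<or> t = v2 \<or> t = v3 \<or> t = v4" using tv VV by simp
      then show False
      proof (elim disjE)
        assume T: "t = v0"
        have EF: "{v0, y0} \<in> E" "{y0, v0} \<in> E" using ear x0 YY T by (simp_all add: walk_def)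
        show False using c1 T x0 J by simp
      next
        assume T: "t = v1"
        have EF: "{v0, y0} \<in> E" "{y0, v1} \<in> E" using ear x0 YY T by (simp_all add: walk_def)
        show False
          by (rule obs_1[OF hw3, of v0 v4 y0 v3 v1 v2]) (use D CF EF in \<open>auto simp: insert_commute\<close>)
      next
        assume T: "t = v2"
        have EF: "{v0, y0} \<in> E" "{y0, v2} \<in> E" using ear x0 YY T by (simp_all add: walk_def)
        show False
          by (rule obs_7[OF hw3, of v1 v0 v4 y0 v3 v2]) (use D CF EF in \<open>auto simp: insert_commute\<close>)
      next
        assume T: "t = v3"
        have EF: "{v0, y0} \<in> E" "{y0, v3} \<in> E" using ear x0 YY T by (simp_all add: walk_def)
        show False
          by (rule obs_4[OF hw3, of v1 v2 v0 v4 y0 v3]) (use D CF EF in \<open>auto simp: insert_commute\<close>)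
      next
        assume T: "t = v4"
        have EF: "{v0, y0} \<in> E" "{y0, v4} \<in> E" using ear x0 YY T by (simp_all add: walk_def)
        show False
          by (rule obs_5[OF hw3, of v2 v1 v3 y0 v0 v4]) (use D CF EF in \<open>auto simp: insert_commute\<close>)
      qed
    next
      assume J: "length ys = 2"
      obtain y0 y1 where YY: "ys = [y0, y1]" by (rule obtain2[OF J])
      have D: "distinct [v0, v1, v2, v3, v4, y0, y1]" using CF(1) dys ysn xys YY VV by auto
      have "t = v0 \<or> t = v1 \<or> t = v2 \<or> t = v3 \<or> t = v4" using tv VV by simp
      then show False
      proof (elim disjE)
        assume T: "t = v0"
        have EF: "{v0, y0} \<in> E" "{y0, y1} \<in> E" "{y1, v0} \<in> E" using ear x0 YY T by (simp_all add: walk_def)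
        show False
          by (rule obs_9[OF hw3, of v2 v1 v3 v4 y0 y1 v0]) (use D CF EF in \<open>auto simp: insert_commute\<close>)
      next
        assume T: "t = v1"
        have EF: "{v0, y0} \<in> E" "{y0, y1} \<in> E" "{y1, v1} \<in> E" using ear x0 YY T by (simp_all add: walk_def)
        show False
          by (rule obs_8[OF hw3, of v0 v4 y0 v3 y1 v2 v1]) (use D CF EF in \<open>auto simp: insert_commute\<close>)
      next
        assume T: "t = v2"
        have EF: "{v0, y0} \<in> E" "{y0, y1} \<in> E" "{y1, v2} \<in> E" using ear x0 YY T by (simp_all add: walk_def)
        show False
          by (rule obs_1[OF hw3, of v0 v4 y0 v3 y1 v2]) (use D CF EF in \<open>auto simp: insert_commute\<close>)
      next
        assume T: "t = v3"
        have EF: "{v0, y0} \<in> E" "{y0, y1} \<in> E" "{y1, v3} \<in> E" using ear x0 YY T by (simp_all add: walk_def)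
        show False
          by (rule obs_7[OF hw3, of v2 v0 y0 v4 y1 v3]) (use D CF EF in \<open>auto simp: insert_commute\<close>)
      next
        assume T: "t = v4"
        have EF: "{v0, y0} \<in> E" "{y0, y1} \<in> E" "{y1, v4} \<in> E" using ear x0 YY T by (simp_all add: walk_def)
        show False
          by (rule obs_4[OF hw3, of v2 v3 y0 v0 y1 v4]) (use D CF EF in \<open>auto simp: insert_commute\<close>)
      qed
    next
      assume J: "length ys = 3"
      obtain y0 y1 y2 where YY: "ys = [y0, y1, y2]" by (rule obtain3[OF J])
      have D: "distinct [v0, v1, v2, v3, v4, y0, y1, y2]" using CF(1) dys ysn xys YY VV by auto
      have "t = v0 \<or> t = v1 \<or> t = v2 \<or> t = v3 \<or> t = v4" using tv VV by simp
      then show False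
      proof (elim disjE)
        assume T: "t = v0"
        have EF: "{v0, y0} \<in> E" "{y0, y1} \<in> E" "{y1, y2} \<in> E" "{y2, v0} \<in> E" using ear x0 YY T by (simp_all add: walk_def)
        show False
          by (rule obs_4[OF hw3, of v3 v4 y1 y0 y2 v0]) (use D CF EF in \<open>auto simp: insert_commute\<close>)
      next
        assume T: "t = v1"
        have EF: "{v0, y0} \<in> E" "{y0, y1} \<in> E" "{y1, y2} \<in> E" "{y2, v1} \<in> E" using ear x0 YY T by (simp_all add: walk_def)
        show False
          by (rule obs_10[OF hw3, of v0 v4 y0 v3 y1 v2 y2 v1]) (use D CF EF in \<open>auto simp: insert_commute\<close>)
      next
        assume T: "t = v2"
        have EF: "{v0, y0} \<in> E" "{y0, y1} \<in> E" "{y1, y2} \<in> E" "{y2, v2} \<in> E" using ear x0 YY T by (simp_all add: walk_def)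
        show False
          by (rule obs_8[OF hw3, of v0 v4 y0 v3 y1 v2 y2]) (use D CF EF in \<open>auto simp: insert_commute\<close>)
      next
        assume T: "t = v3"
        have EF: "{v0, y0} \<in> E" "{y0, y1} \<in> E" "{y1, y2} \<in> E" "{y2, v3} \<in> E" using ear x0 YY T by (simp_all add: walk_def)
        show False
          by (rule obs_1[OF hw3, of v0 v4 y0 v3 y1 y2]) (use D CF EF in \<open>auto simp: insert_commute\<close>)
      next
        assume T: "t = v4"
        have EF: "{v0, y0} \<in> E" "{y0, y1} \<in> E" "{y1, y2} \<in> E" "{y2, v4} \<in> E" using ear x0 YY T by (simp_all add: walk_def)
        show False
          by (rule obs_7[OF hw3, of v3 y0 y1 v0 y2 v4]) (use D CF EF in \<open>auto simp: insert_commute\<close>)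
      qed
    next
      assume J: "length ys = 4"
      obtain y0 y1 y2 y3 where YY: "ys = [y0, y1, y2, y3]" by (rule obtain4[OF J])
      have D: "distinct [v0, v1, v2, v3, v4, y0, y1, y2, y3]" using CF(1) dys ysn xys YY VV by auto
      have "t = v0 \<or> t = v1 \<or> t = v2 \<or> t = v3 \<or> t = v4" using tv VV by simp
      then show False
      proof (elim disjE)
        assume T: "t = v0"
        have EF: "{v0, y0} \<in> E" "{y0, y1} \<in> E" "{y1, y2} \<in> E" "{y2, y3} \<in> E" "{y3, v0} \<in> E" using ear x0 YY T by (simp_all add: walk_def)
        show False
          by (rule obs_7[OF hw3, of v4 y1 y2 y0 y3 v0]) (use D CF EF in \<open>auto simp: insert_commute\<close>)
      next
        assume T: "t = v1"
        have EF: "{v0, y0} \<in> E" "{y0, y1} \<in> E" "{y1, y2} \<in> E" "{y2, y3} \<in> E" "{y3, v1} \<in> E" using ear x0 YY T by (simp_all add: walk_def)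
        show False
          by (rule obs_13[OF hw3, of v1 v2 y3 v3 y2 v4 y1 v0 y0]) (use D CF EF in \<open>auto simp: insert_commute\<close>)
      next
        assume T: "t = v2"
        have EF: "{v0, y0} \<in> E" "{y0, y1} \<in> E" "{y1, y2} \<in> E" "{y2, y3} \<in> E" "{y3, v2} \<in> E" using ear x0 YY T by (simp_all add: walk_def)
        show False
          by (rule obs_10[OF hw3, of v0 v4 y0 v3 y1 v2 y2 y3]) (use D CF EF in \<open>auto simp: insert_commute\<close>)
      next
        assume T: "t = v3"
        have EF: "{v0, y0} \<in> E" "{y0, y1} \<in> E" "{y1, y2} \<in> E" "{y2, y3} \<in> E" "{y3, v3} \<in> E" using ear x0 YY T by (simp_all add: walk_def)
        show False
          by (rule obs_8[OF hw3, of v0 v4 y0 v3 y1 y3 y2]) (use D CF EF in \<open>auto simp: insert_commute\<close>)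
      next
        assume T: "t = v4"
        have EF: "{v0, y0} \<in> E" "{y0, y1} \<in> E" "{y1, y2} \<in> E" "{y2, y3} \<in> E" "{y3, v4} \<in> E" using ear x0 YY T by (simp_all add: walk_def)
        show False
          by (rule obs_1[OF hw3, of v0 v4 y0 y3 y1 y2]) (use D CF EF in \<open>auto simp: insert_commute\<close>)
      qed
    qed
  qed
qed

lemma final_db:
  assumes hw3: "\<forall>v. herder_wins E v 3" and sg: "simple_graph V E" and cg: "connected_graph V E"
    and D: "distinct [a, b, c, x, y, z]"
    and EF: "{a, b} \<in> E" "{b, c} \<in> E" "{c, a} \<in> E" "{x, y} \<in> E" "{y, z} \<in> E" "{z, x} \<in> E" "{a, x} \<in> E"
  shows "card V = 6 \<and>
    (\<exists>a b c x y z. distinct [a, b, c, x, y, z] \<and> V = {a, b, c, x, y, z} \<and>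
       E = {{a, b}, {b, c}, {a, c}, {x, y}, {y, z}, {x, z}, {a, x}})"
proof -
  have pend: "{p, q} \<notin> E" if p: "p \<in> {a, b, c, x, y, z}" and q: "q \<notin> {a, b, c, x, y, z}" for p q
  proof
    assume pq: "{p, q} \<in> E"
    have D7: "distinct [a, b, c, x, y, z, q]" using D q by auto
    from p show False
    proof (elim insertE)
      assume P: "p = a"
      show False
        by (rule obs_9[OF hw3, of y q z x b c a]) (use D7 EF pq P in \<open>auto simp: insert_commute\<close>)
    next
      assume P: "p = b"
      show False
        by (rule obs_5[OF hw3, of z q x c b a]) (use D7 EF pq P in \<open>auto simp: insert_commute\<close>)
    next
      assume P: "p = c"
      show False
        by (rule obs_5[OF hw3, of z q x b c a]) (use D7 EF pq P in \<open>auto simp: insert_commute\<close>)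
    next
      assume P: "p = x"
      show False
        by (rule obs_9[OF hw3, of b q c a y z x]) (use D7 EF pq P in \<open>auto simp: insert_commute\<close>)
    next
      assume P: "p = y"
      show False
        by (rule obs_5[OF hw3, of c q a z y x]) (use D7 EF pq P in \<open>auto simp: insert_commute\<close>)
    next
      assume P: "p = z"
      show False
        by (rule obs_5[OF hw3, of b q a y z x]) (use D7 EF pq P in \<open>auto simp: insert_commute\<close>)
    qed simp
  qed
  have ne_ay: "{a, y} \<notin> E"
  proof
    assume X: "{a, y} \<in> E"
    show False
      by (rule obs_0[OF hw3, of a z x y]) (use D EF X in \<open>auto simp: insert_commute\<close>)
  qed
  have ne_az: "{a, z} \<notin> E"
  proof
    assume X: "{a, z} \<in> E"
    show False
      by (rule obs_0[OF hw3, of a y x z]) (use D EF X in \<open>auto simp: insert_commute\<close>)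
  qed
  have ne_xb: "{x, b} \<notin> E"
  proof
    assume X: "{x, b} \<in> E"
    show False
      by (rule obs_0[OF hw3, of x c a b]) (use D EF X in \<open>auto simp: insert_commute\<close>)
  qed
  have ne_xc: "{x, c} \<notin> E"
  proof
    assume X: "{x, c} \<in> E"
    show False
      by (rule obs_0[OF hw3, of x b a c]) (use D EF X in \<open>auto simp: insert_commute\<close>)
  qed
  have ne_by: "{b, y} \<notin> E"
  proof
    assume X: "{b, y} \<in> E"
    show False
      by (rule obs_5[OF hw3, of c b a z y x]) (use D EF X in \<open>auto simp: insert_commute\<close>)
  qed
  have ne_bz: "{b, z} \<notin> E"
  proof
    assume X: "{b, z} \<in> E"
    show False
      by (rule obs_5[OF hw3, of c b a y z x]) (use D EF X in \<open>auto simp: insert_commute\<close>)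
  qed
  have ne_cy: "{c, y} \<notin> E"
  proof
    assume X: "{c, y} \<in> E"
    show False
      by (rule obs_5[OF hw3, of b c a z y x]) (use D EF X in \<open>auto simp: insert_commute\<close>)
  qed
  have ne_cz: "{c, z} \<notin> E"
  proof
    assume X: "{c, z} \<in> E"
    show False
      by (rule obs_5[OF hw3, of b c a y z x]) (use D EF X in \<open>auto simp: insert_commute\<close>)
  qed
  have SV: "{a, b, c, x, y, z} \<subseteq> V" using EF EV[OF sg] by blast
  have VS: "V = {a, b, c, x, y, z}"
  proof (rule ccontr)
    assume "V \<noteq> {a, b, c, x, y, z}"
    then obtain q where "q \<in> V" "q \<notin> {a, b, c, x, y, z}" using SV by blast
    then obtain p' q' where "p' \<in> {a, b, c, x, y, z}" "q' \<notin> {a, b, c, x, y, z}" "{p', q'} \<in> E"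
      using crossing[OF cg, of a "{a, b, c, x, y, z}" q] SV by blast
    then show False using pend by blast
  qed
  have ES: "E \<subseteq> {{a, b}, {b, c}, {a, c}, {x, y}, {y, z}, {x, z}, {a, x}}"
  proof
    fix e assume e: "e \<in> E"
    then obtain p q where pq: "p \<noteq> q" "p \<in> V" "q \<in> V" "e = {p, q}"
      using sg unfolding simple_graph_def by blast
    have p: "p = a \<or> p = b \<or> p = c \<or> p = x \<or> p = y \<or> p = z" using pq VS by auto
    have q: "q = a \<or> q = b \<or> q = c \<or> q = x \<or> q = y \<or> q = z" using pq VS by auto
    have pqE: "{p, q} \<in> E" using e pq by simp
    have NE: "{a, y} \<notin> E" "{y, a} \<notin> E" "{a, z} \<notin> E" "{z, a} \<notin> E" "{x, b} \<notin> E" "{b, x} \<notin> E"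
      "{x, c} \<notin> E" "{c, x} \<notin> E" "{b, y} \<notin> E" "{y, b} \<notin> E" "{b, z} \<notin> E" "{z, b} \<notin> E"
      "{c, y} \<notin> E" "{y, c} \<notin> E" "{c, z} \<notin> E" "{z, c} \<notin> E"
      using ne_ay ne_az ne_xb ne_xc ne_by ne_bz ne_cy ne_cz by (simp_all add: insert_commute)
    from p q have "{p, q} \<in> {{a, b}, {b, c}, {a, c}, {x, y}, {y, z}, {x, z}, {a, x}}"
      by (elim disjE) (use pqE NE pq(1) in \<open>simp_all add: insert_commute\<close>)
    then show "e \<in> {{a, b}, {b, c}, {a, c}, {x, y}, {y, z}, {x, z}, {a, x}}" using pq(4) by simp
  qed
  have "{{a, b}, {b, c}, {a, c}, {x, y}, {y, z}, {x, z}, {a, x}} \<subseteq> E"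
    using EF by (simp add: insert_commute)
  then have "E = {{a, b}, {b, c}, {a, c}, {x, y}, {y, z}, {x, z}, {a, x}}"
    using ES by (rule subset_antisym[rotated])
  moreover have "card V = 6" using VS distinct_card[OF D] by simp
  ultimately show ?thesis using D VS by blast
qed

lemma disjoint_case:
  assumes hw3: "\<forall>v. herder_wins E v 3" and sg: "simple_graph V E" and cg: "connected_graph V E"
    and cv: "cyc E vs" and cw: "cyc E ws" and disj: "set ws \<inter> set vs = {}"
    and lv: "length vs \<le> 5" and lw: "length ws \<le> 5"
  shows "card V = 6 \<and>
    (\<exists>a b c x y z. distinct [a, b, c, x, y, z] \<and> V = {a, b, c, x, y, z} \<and>
       E = {{a, b}, {b, c}, {a, c}, {x, y}, {y, z}, {x, z}, {a, x}})"
proof -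
  have vsne: "vs \<noteq> []" and wsne: "ws \<noteq> []" using cv cw unfolding cyc_def by auto
  have hv: "hd vs \<in> set vs" and hw: "hd ws \<in> set ws" using vsne wsne by auto
  have hvV: "hd vs \<in> V" using cyc_V[OF sg cv] hv by blast
  have hwV: "hd ws \<in> V" using cyc_V[OF sg cw] hw by blast
  have hne: "hd vs \<noteq> hd ws"
  proof
    assume "hd vs = hd ws"
    then have "hd vs \<in> set ws \<inter> set vs" using hv hw by simp
    then show False using disj by simp
  qed
  have cgc: "\<forall>x\<in>V. \<forall>y\<in>V. x = y \<or> reach E x y" using cg unfolding connected_graph_def by (rule conjunct2)
  have "hd vs = hd ws \<or> reach E (hd vs) (hd ws)" using bspec[OF bspec[OF cgc hvV] hwV] .
  then have r: "reach E (hd vs) (hd ws)" using hne by simp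
  have "\<exists>ps. ps \<noteq> [] \<and> hd ps = hd vs \<and> last ps = hd ws \<and> walk E ps" using walk_of_reach[OF r] .
  then obtain ps where ps: "ps \<noteq> []" "hd ps = hd vs" "last ps = hd ws" "walk E ps" by blast
  have dj: "set vs \<inter> set ws = {}" using disj by blast
  have hp: "hd ps \<in> set vs" using ps(2) hv by simp
  have lp: "last ps \<in> set ws" using ps(3) hw by simp
  have "\<exists>a mid b. a \<in> set vs \<and> b \<in> set ws \<and> set mid \<inter> set vs = {} \<and> set mid \<inter> set ws = {} \<and>
     distinct (a # mid @ [b]) \<and> walk E (a # mid @ [b])" using good_path[OF dj ps(1) hp lp ps(4)] .
  then obtain a0 mid b0 where G: "a0 \<in> set vs" "b0 \<in> set ws" "set mid \<inter> set vs = {}"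
    "set mid \<inter> set ws = {}" "distinct (a0 # mid @ [b0])" "walk E (a0 # mid @ [b0])" by blast
  obtain vs' where V: "cyc E vs'" "set vs' = set vs" "length vs' = length vs" "hd vs' = a0"
    using cyc_rot_to[OF cv G(1)] by blast
  obtain ws' where W: "cyc E ws'" "set ws' = set ws" "length ws' = length ws" "hd ws' = b0"
    using cyc_rot_to[OF cw G(2)] by blast
  have lv3: "3 \<le> length vs'" using V(1) unfolding cyc_def by simp
  have lw3: "3 \<le> length ws'" using W(1) unfolding cyc_def by simp
  have dvw: "set vs' \<inter> set ws' = {}" using disj V(2) W(2) by blast
  have m1: "set mid \<inter> set vs' = {}" "set mid \<inter> set ws' = {}" using G(3,4) V(2) W(2) by auto
  show ?thesis
  proof (cases "3 \<le> length mid")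
    case True
    obtain vr where VR: "vs' = a0 # vr" using V(4) lv3 by (cases vs') auto
    obtain w1 w2 wr where WR: "ws' = b0 # w1 # w2 # wr" using W(4) lw3
      by (cases ws'; cases "tl ws'"; cases "tl (tl ws')") auto
    have "walk E ([a0] @ (vr @ [a0]))" using V(1) VR unfolding cyc_def by simp
    then have w1: "walk E (vr @ [a0])" by (rule walk_suffix)
    have w2: "walk E (vr @ a0 # mid @ [b0])" using walk_join[OF w1 G(6)] .
    have "walk E ([b0, w1, w2] @ (wr @ [b0]))" using W(1) WR unfolding cyc_def by simp
    then have w3: "walk E [b0, w1, w2]" by (rule walk_prefix)
    have w4: "walk E ((vr @ a0 # mid) @ b0 # [w1, w2])"
      using walk_join[of E "vr @ a0 # mid" b0 "[w1, w2]"] w2 w3 by simp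
    have dv: "distinct (a0 # vr)" using V(1) VR unfolding cyc_def by simp
    have dw: "distinct (b0 # w1 # w2 # wr)" using W(1) WR unfolding cyc_def by simp
    have svr: "set vr \<subseteq> set vs'" using VR by auto
    have sw: "{b0, w1, w2} \<subseteq> set ws'" using WR by auto
    have A: "distinct (vr @ a0 # mid @ [b0])"
    proof -
      have "set vr \<inter> set (a0 # mid @ [b0]) = {}"
      proof -
        have "a0 \<notin> set vr" using dv by simp
        moreover have "set vr \<inter> set mid = {}" using svr m1(1) by blast
        moreover have "b0 \<notin> set vr" using svr sw dvw by blast
        ultimately show ?thesis by auto
      qed
      moreover have "distinct vr" using dv by simp
      ultimately show ?thesis using G(5) by simp
    qed
    have B: "set (vr @ a0 # mid) \<inter> set [w1, w2] = {}"
    proof -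
      have "set vs' \<inter> {w1, w2} = {}" using sw dvw by blast
      moreover have "set mid \<inter> {w1, w2} = {}" using sw m1(2) by blast
      moreover have "a0 \<in> set vs'" using VR by simp
      ultimately show ?thesis using svr by auto
    qed
    have "distinct ((vr @ a0 # mid) @ b0 # [w1, w2])"
    proof -
      have "distinct [w1, w2]" "b0 \<notin> set [w1, w2]" using dw by auto
      then show ?thesis using A B by auto
    qed
    moreover have "9 \<le> length ((vr @ a0 # mid) @ b0 # [w1, w2])" using True lv3 VR by simp
    ultimately show ?thesis using path_obs[OF hw3 w4] by blast
  next
    case False
    then have "length mid = 0 \<or> length mid = 1 \<or> length mid = 2" by linarith
    moreover have "length vs' = 3 \<or> length vs' = 4 \<or> length vs' = 5" using lv3 lv V(3) by linarith
    moreover have "length ws' = 3 \<or> length ws' = 4 \<or> length ws' = 5" using lw3 lw W(3) by linarith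
    ultimately show ?thesis
    proof (elim disjE)
      assume J: "length mid = 0" and L: "length vs' = 3" and M: "length ws' = 3"
      obtain v0 v1 v2 where VV: "vs' = [v0, v1, v2]" by (rule obtain3[OF L])
      obtain w0 w1 w2 where WW: "ws' = [w0, w1, w2]" by (rule obtain3[OF M])
      have PP: "mid = []" using J by simp
      have a0: "a0 = v0" using V(4) VV by simp
      have b0: "b0 = w0" using W(4) WW by simp
      have CF: "{v0, v1} \<in> E" "{v1, v2} \<in> E" "{v2, v0} \<in> E" using V(1) VV by (simp_all add: cyc_def walk_def)
      have CW: "{w0, w1} \<in> E" "{w1, w2} \<in> E" "{w2, w0} \<in> E" using W(1) WW by (simp_all add: cyc_def walk_def)
      have EF: "{v0, w0} \<in> E" using G(6) a0 b0 PP by (simp_all add: walk_def)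
      have D: "distinct [v0, v1, v2, w0, w1, w2]"
        using V(1) W(1) VV WW PP m1 dvw G(5) a0 b0 unfolding cyc_def by auto
      show ?thesis using final_db[OF hw3 sg cg D CF CW EF] .
    next
      assume J: "length mid = 0" and L: "length vs' = 3" and M: "length ws' = 4"
      obtain v0 v1 v2 where VV: "vs' = [v0, v1, v2]" by (rule obtain3[OF L])
      obtain w0 w1 w2 w3 where WW: "ws' = [w0, w1, w2, w3]" by (rule obtain4[OF M])
      have PP: "mid = []" using J by simp
      have a0: "a0 = v0" using V(4) VV by simp
      have b0: "b0 = w0" using W(4) WW by simp
      have CF: "{v0, v1} \<in> E" "{v1, v2} \<in> E" "{v2, v0} \<in> E" using V(1) VV by (simp_all add: cyc_def walk_def)
      have CW: "{w0, w1} \<in> E" "{w1, w2} \<in> E" "{w2, w3} \<in> E" "{w3, w0} \<in> E" using W(1) WW by (simp_all add: cyc_def walk_def)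
      have EF: "{v0, w0} \<in> E" using G(6) a0 b0 PP by (simp_all add: walk_def)
      have D: "distinct [v0, v1, v2, w0, w1, w2, w3]"
        using V(1) W(1) VV WW PP m1 dvw G(5) a0 b0 unfolding cyc_def by auto
      have False
        by (rule obs_4[OF hw3, of v2 v0 w2 w1 w3 w0]) (use D CF CW EF in \<open>auto simp: insert_commute\<close>)
      then show ?thesis by blast
    next
      assume J: "length mid = 0" and L: "length vs' = 3" and M: "length ws' = 5"
      obtain v0 v1 v2 where VV: "vs' = [v0, v1, v2]" by (rule obtain3[OF L])
      obtain w0 w1 w2 w3 w4 where WW: "ws' = [w0, w1, w2, w3, w4]" by (rule obtain5[OF M])
      have PP: "mid = []" using J by simp
      have a0: "a0 = v0" using V(4) VV by simp
      have b0: "b0 = w0" using W(4) WW by simp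
      have CF: "{v0, v1} \<in> E" "{v1, v2} \<in> E" "{v2, v0} \<in> E" using V(1) VV by (simp_all add: cyc_def walk_def)
      have CW: "{w0, w1} \<in> E" "{w1, w2} \<in> E" "{w2, w3} \<in> E" "{w3, w4} \<in> E" "{w4, w0} \<in> E" using W(1) WW by (simp_all add: cyc_def walk_def)
      have EF: "{v0, w0} \<in> E" using G(6) a0 b0 PP by (simp_all add: walk_def)
      have D: "distinct [v0, v1, v2, w0, w1, w2, w3, w4]"
        using V(1) W(1) VV WW PP m1 dvw G(5) a0 b0 unfolding cyc_def by auto
      have False
        by (rule obs_7[OF hw3, of v0 w2 w3 w1 w4 w0]) (use D CF CW EF in \<open>auto simp: insert_commute\<close>)
      then show ?thesis by blast
    next
      assume J: "length mid = 0" and L: "length vs' = 4" and M: "length ws' = 3"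
      obtain v0 v1 v2 v3 where VV: "vs' = [v0, v1, v2, v3]" by (rule obtain4[OF L])
      obtain w0 w1 w2 where WW: "ws' = [w0, w1, w2]" by (rule obtain3[OF M])
      have PP: "mid = []" using J by simp
      have a0: "a0 = v0" using V(4) VV by simp
      have b0: "b0 = w0" using W(4) WW by simp
      have CF: "{v0, v1} \<in> E" "{v1, v2} \<in> E" "{v2, v3} \<in> E" "{v3, v0} \<in> E" using V(1) VV by (simp_all add: cyc_def walk_def)
      have CW: "{w0, w1} \<in> E" "{w1, w2} \<in> E" "{w2, w0} \<in> E" using W(1) WW by (simp_all add: cyc_def walk_def)
      have EF: "{v0, w0} \<in> E" using G(6) a0 b0 PP by (simp_all add: walk_def)
      have D: "distinct [v0, v1, v2, v3, w0, w1, w2]"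
        using V(1) W(1) VV WW PP m1 dvw G(5) a0 b0 unfolding cyc_def by auto
      have False
        by (rule obs_4[OF hw3, of w2 w0 v2 v1 v3 v0]) (use D CF CW EF in \<open>auto simp: insert_commute\<close>)
      then show ?thesis by blast
    next
      assume J: "length mid = 0" and L: "length vs' = 4" and M: "length ws' = 4"
      obtain v0 v1 v2 v3 where VV: "vs' = [v0, v1, v2, v3]" by (rule obtain4[OF L])
      obtain w0 w1 w2 w3 where WW: "ws' = [w0, w1, w2, w3]" by (rule obtain4[OF M])
      have PP: "mid = []" using J by simp
      have a0: "a0 = v0" using V(4) VV by simp
      have b0: "b0 = w0" using W(4) WW by simp
      have CF: "{v0, v1} \<in> E" "{v1, v2} \<in> E" "{v2, v3} \<in> E" "{v3, v0} \<in> E" using V(1) VV by (simp_all add: cyc_def walk_def)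
      have CW: "{w0, w1} \<in> E" "{w1, w2} \<in> E" "{w2, w3} \<in> E" "{w3, w0} \<in> E" using W(1) WW by (simp_all add: cyc_def walk_def)
      have EF: "{v0, w0} \<in> E" using G(6) a0 b0 PP by (simp_all add: walk_def)
      have D: "distinct [v0, v1, v2, v3, w0, w1, w2, w3]"
        using V(1) W(1) VV WW PP m1 dvw G(5) a0 b0 unfolding cyc_def by auto
      have False
        by (rule obs_4[OF hw3, of v3 v0 w2 w1 w3 w0]) (use D CF CW EF in \<open>auto simp: insert_commute\<close>)
      then show ?thesis by blast
    next
      assume J: "length mid = 0" and L: "length vs' = 4" and M: "length ws' = 5"
      obtain v0 v1 v2 v3 where VV: "vs' = [v0, v1, v2, v3]" by (rule obtain4[OF L])
      obtain w0 w1 w2 w3 w4 where WW: "ws' = [w0, w1, w2, w3, w4]" by (rule obtain5[OF M])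
      have PP: "mid = []" using J by simp
      have a0: "a0 = v0" using V(4) VV by simp
      have b0: "b0 = w0" using W(4) WW by simp
      have CF: "{v0, v1} \<in> E" "{v1, v2} \<in> E" "{v2, v3} \<in> E" "{v3, v0} \<in> E" using V(1) VV by (simp_all add: cyc_def walk_def)
      have CW: "{w0, w1} \<in> E" "{w1, w2} \<in> E" "{w2, w3} \<in> E" "{w3, w4} \<in> E" "{w4, w0} \<in> E" using W(1) WW by (simp_all add: cyc_def walk_def)
      have EF: "{v0, w0} \<in> E" using G(6) a0 b0 PP by (simp_all add: walk_def)
      have D: "distinct [v0, v1, v2, v3, w0, w1, w2, w3, w4]"
        using V(1) W(1) VV WW PP m1 dvw G(5) a0 b0 unfolding cyc_def by auto
      have False
        by (rule obs_7[OF hw3, of v0 w2 w3 w1 w4 w0]) (use D CF CW EF in \<open>auto simp: insert_commute\<close>)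
      then show ?thesis by blast
    next
      assume J: "length mid = 0" and L: "length vs' = 5" and M: "length ws' = 3"
      obtain v0 v1 v2 v3 v4 where VV: "vs' = [v0, v1, v2, v3, v4]" by (rule obtain5[OF L])
      obtain w0 w1 w2 where WW: "ws' = [w0, w1, w2]" by (rule obtain3[OF M])
      have PP: "mid = []" using J by simp
      have a0: "a0 = v0" using V(4) VV by simp
      have b0: "b0 = w0" using W(4) WW by simp
      have CF: "{v0, v1} \<in> E" "{v1, v2} \<in> E" "{v2, v3} \<in> E" "{v3, v4} \<in> E" "{v4, v0} \<in> E" using V(1) VV by (simp_all add: cyc_def walk_def)
      have CW: "{w0, w1} \<in> E" "{w1, w2} \<in> E" "{w2, w0} \<in> E" using W(1) WW by (simp_all add: cyc_def walk_def)
      have EF: "{v0, w0} \<in> E" using G(6) a0 b0 PP by (simp_all add: walk_def)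
      have D: "distinct [v0, v1, v2, v3, v4, w0, w1, w2]"
        using V(1) W(1) VV WW PP m1 dvw G(5) a0 b0 unfolding cyc_def by auto
      have False
        by (rule obs_12[OF hw3, of v1 v2 v3 v4 v0 w1 w2 w0]) (use D CF CW EF in \<open>auto simp: insert_commute\<close>)
      then show ?thesis by blast
    next
      assume J: "length mid = 0" and L: "length vs' = 5" and M: "length ws' = 4"
      obtain v0 v1 v2 v3 v4 where VV: "vs' = [v0, v1, v2, v3, v4]" by (rule obtain5[OF L])
      obtain w0 w1 w2 w3 where WW: "ws' = [w0, w1, w2, w3]" by (rule obtain4[OF M])
      have PP: "mid = []" using J by simp
      have a0: "a0 = v0" using V(4) VV by simp
      have b0: "b0 = w0" using W(4) WW by simp
      have CF: "{v0, v1} \<in> E" "{v1, v2} \<in> E" "{v2, v3} \<in> E" "{v3, v4} \<in> E" "{v4, v0} \<in> E" using V(1) VV by (simp_all add: cyc_def walk_def)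
      have CW: "{w0, w1} \<in> E" "{w1, w2} \<in> E" "{w2, w3} \<in> E" "{w3, w0} \<in> E" using W(1) WW by (simp_all add: cyc_def walk_def)
      have EF: "{v0, w0} \<in> E" using G(6) a0 b0 PP by (simp_all add: walk_def)
      have D: "distinct [v0, v1, v2, v3, v4, w0, w1, w2, w3]"
        using V(1) W(1) VV WW PP m1 dvw G(5) a0 b0 unfolding cyc_def by auto
      have False
        by (rule obs_4[OF hw3, of v4 v0 w2 w1 w3 w0]) (use D CF CW EF in \<open>auto simp: insert_commute\<close>)
      then show ?thesis by blast
    next
      assume J: "length mid = 0" and L: "length vs' = 5" and M: "length ws' = 5"
      obtain v0 v1 v2 v3 v4 where VV: "vs' = [v0, v1, v2, v3, v4]" by (rule obtain5[OF L])
      obtain w0 w1 w2 w3 w4 where WW: "ws' = [w0, w1, w2, w3, w4]" by (rule obtain5[OF M])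
      have PP: "mid = []" using J by simp
      have a0: "a0 = v0" using V(4) VV by simp
      have b0: "b0 = w0" using W(4) WW by simp
      have CF: "{v0, v1} \<in> E" "{v1, v2} \<in> E" "{v2, v3} \<in> E" "{v3, v4} \<in> E" "{v4, v0} \<in> E" using V(1) VV by (simp_all add: cyc_def walk_def)
      have CW: "{w0, w1} \<in> E" "{w1, w2} \<in> E" "{w2, w3} \<in> E" "{w3, w4} \<in> E" "{w4, w0} \<in> E" using W(1) WW by (simp_all add: cyc_def walk_def)
      have EF: "{v0, w0} \<in> E" using G(6) a0 b0 PP by (simp_all add: walk_def)
      have D: "distinct [v0, v1, v2, v3, v4, w0, w1, w2, w3, w4]"
        using V(1) W(1) VV WW PP m1 dvw G(5) a0 b0 unfolding cyc_def by auto
      have False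
        by (rule obs_7[OF hw3, of v0 w2 w3 w1 w4 w0]) (use D CF CW EF in \<open>auto simp: insert_commute\<close>)
      then show ?thesis by blast
    next
      assume J: "length mid = 1" and L: "length vs' = 3" and M: "length ws' = 3"
      obtain v0 v1 v2 where VV: "vs' = [v0, v1, v2]" by (rule obtain3[OF L])
      obtain w0 w1 w2 where WW: "ws' = [w0, w1, w2]" by (rule obtain3[OF M])
      obtain p0 where PP: "mid = [p0]" by (rule obtain1[OF J])
      have a0: "a0 = v0" using V(4) VV by simp
      have b0: "b0 = w0" using W(4) WW by simp
      have CF: "{v0, v1} \<in> E" "{v1, v2} \<in> E" "{v2, v0} \<in> E" using V(1) VV by (simp_all add: cyc_def walk_def)
      have CW: "{w0, w1} \<in> E" "{w1, w2} \<in> E" "{w2, w0} \<in> E" using W(1) WW by (simp_all add: cyc_def walk_def)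
      have EF: "{v0, p0} \<in> E" "{p0, w0} \<in> E" using G(6) a0 b0 PP by (simp_all add: walk_def)
      have D: "distinct [v0, v1, v2, p0, w0, w1, w2]"
        using V(1) W(1) VV WW PP m1 dvw G(5) a0 b0 unfolding cyc_def by auto
      have False
        by (rule obs_11[OF hw3, of v1 v2 w1 w2 p0 v0 w0]) (use D CF CW EF in \<open>auto simp: insert_commute\<close>)
      then show ?thesis by blast
    next
      assume J: "length mid = 1" and L: "length vs' = 3" and M: "length ws' = 4"
      obtain v0 v1 v2 where VV: "vs' = [v0, v1, v2]" by (rule obtain3[OF L])
      obtain w0 w1 w2 w3 where WW: "ws' = [w0, w1, w2, w3]" by (rule obtain4[OF M])
      obtain p0 where PP: "mid = [p0]" by (rule obtain1[OF J])
      have a0: "a0 = v0" using V(4) VV by simp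
      have b0: "b0 = w0" using W(4) WW by simp
      have CF: "{v0, v1} \<in> E" "{v1, v2} \<in> E" "{v2, v0} \<in> E" using V(1) VV by (simp_all add: cyc_def walk_def)
      have CW: "{w0, w1} \<in> E" "{w1, w2} \<in> E" "{w2, w3} \<in> E" "{w3, w0} \<in> E" using W(1) WW by (simp_all add: cyc_def walk_def)
      have EF: "{v0, p0} \<in> E" "{p0, w0} \<in> E" using G(6) a0 b0 PP by (simp_all add: walk_def)
      have D: "distinct [v0, v1, v2, p0, w0, w1, w2, w3]"
        using V(1) W(1) VV WW PP m1 dvw G(5) a0 b0 unfolding cyc_def by auto
      have False
        by (rule obs_4[OF hw3, of v0 p0 w2 w1 w3 w0]) (use D CF CW EF in \<open>auto simp: insert_commute\<close>)
      then show ?thesis by blast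
    next
      assume J: "length mid = 1" and L: "length vs' = 3" and M: "length ws' = 5"
      obtain v0 v1 v2 where VV: "vs' = [v0, v1, v2]" by (rule obtain3[OF L])
      obtain w0 w1 w2 w3 w4 where WW: "ws' = [w0, w1, w2, w3, w4]" by (rule obtain5[OF M])
      obtain p0 where PP: "mid = [p0]" by (rule obtain1[OF J])
      have a0: "a0 = v0" using V(4) VV by simp
      have b0: "b0 = w0" using W(4) WW by simp
      have CF: "{v0, v1} \<in> E" "{v1, v2} \<in> E" "{v2, v0} \<in> E" using V(1) VV by (simp_all add: cyc_def walk_def)
      have CW: "{w0, w1} \<in> E" "{w1, w2} \<in> E" "{w2, w3} \<in> E" "{w3, w4} \<in> E" "{w4, w0} \<in> E" using W(1) WW by (simp_all add: cyc_def walk_def)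
      have EF: "{v0, p0} \<in> E" "{p0, w0} \<in> E" using G(6) a0 b0 PP by (simp_all add: walk_def)
      have D: "distinct [v0, v1, v2, p0, w0, w1, w2, w3, w4]"
        using V(1) W(1) VV WW PP m1 dvw G(5) a0 b0 unfolding cyc_def by auto
      have False
        by (rule obs_7[OF hw3, of p0 w2 w3 w1 w4 w0]) (use D CF CW EF in \<open>auto simp: insert_commute\<close>)
      then show ?thesis by blast
    next
      assume J: "length mid = 1" and L: "length vs' = 4" and M: "length ws' = 3"
      obtain v0 v1 v2 v3 where VV: "vs' = [v0, v1, v2, v3]" by (rule obtain4[OF L])
      obtain w0 w1 w2 where WW: "ws' = [w0, w1, w2]" by (rule obtain3[OF M])
      obtain p0 where PP: "mid = [p0]" by (rule obtain1[OF J])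
      have a0: "a0 = v0" using V(4) VV by simp
      have b0: "b0 = w0" using W(4) WW by simp
      have CF: "{v0, v1} \<in> E" "{v1, v2} \<in> E" "{v2, v3} \<in> E" "{v3, v0} \<in> E" using V(1) VV by (simp_all add: cyc_def walk_def)
      have CW: "{w0, w1} \<in> E" "{w1, w2} \<in> E" "{w2, w0} \<in> E" using W(1) WW by (simp_all add: cyc_def walk_def)
      have EF: "{v0, p0} \<in> E" "{p0, w0} \<in> E" using G(6) a0 b0 PP by (simp_all add: walk_def)
      have D: "distinct [v0, v1, v2, v3, p0, w0, w1, w2]"
        using V(1) W(1) VV WW PP m1 dvw G(5) a0 b0 unfolding cyc_def by auto
      have False
        by (rule obs_12[OF hw3, of v1 v2 v3 v0 p0 w1 w2 w0]) (use D CF CW EF in \<open>auto simp: insert_commute\<close>)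
      then show ?thesis by blast
    next
      assume J: "length mid = 1" and L: "length vs' = 4" and M: "length ws' = 4"
      obtain v0 v1 v2 v3 where VV: "vs' = [v0, v1, v2, v3]" by (rule obtain4[OF L])
      obtain w0 w1 w2 w3 where WW: "ws' = [w0, w1, w2, w3]" by (rule obtain4[OF M])
      obtain p0 where PP: "mid = [p0]" by (rule obtain1[OF J])
      have a0: "a0 = v0" using V(4) VV by simp
      have b0: "b0 = w0" using W(4) WW by simp
      have CF: "{v0, v1} \<in> E" "{v1, v2} \<in> E" "{v2, v3} \<in> E" "{v3, v0} \<in> E" using V(1) VV by (simp_all add: cyc_def walk_def)
      have CW: "{w0, w1} \<in> E" "{w1, w2} \<in> E" "{w2, w3} \<in> E" "{w3, w0} \<in> E" using W(1) WW by (simp_all add: cyc_def walk_def)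
      have EF: "{v0, p0} \<in> E" "{p0, w0} \<in> E" using G(6) a0 b0 PP by (simp_all add: walk_def)
      have D: "distinct [v0, v1, v2, v3, p0, w0, w1, w2, w3]"
        using V(1) W(1) VV WW PP m1 dvw G(5) a0 b0 unfolding cyc_def by auto
      have False
        by (rule obs_4[OF hw3, of v0 p0 w2 w1 w3 w0]) (use D CF CW EF in \<open>auto simp: insert_commute\<close>)
      then show ?thesis by blast
    next
      assume J: "length mid = 1" and L: "length vs' = 4" and M: "length ws' = 5"
      obtain v0 v1 v2 v3 where VV: "vs' = [v0, v1, v2, v3]" by (rule obtain4[OF L])
      obtain w0 w1 w2 w3 w4 where WW: "ws' = [w0, w1, w2, w3, w4]" by (rule obtain5[OF M])
      obtain p0 where PP: "mid = [p0]" by (rule obtain1[OF J])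
      have a0: "a0 = v0" using V(4) VV by simp
      have b0: "b0 = w0" using W(4) WW by simp
      have CF: "{v0, v1} \<in> E" "{v1, v2} \<in> E" "{v2, v3} \<in> E" "{v3, v0} \<in> E" using V(1) VV by (simp_all add: cyc_def walk_def)
      have CW: "{w0, w1} \<in> E" "{w1, w2} \<in> E" "{w2, w3} \<in> E" "{w3, w4} \<in> E" "{w4, w0} \<in> E" using W(1) WW by (simp_all add: cyc_def walk_def)
      have EF: "{v0, p0} \<in> E" "{p0, w0} \<in> E" using G(6) a0 b0 PP by (simp_all add: walk_def)
      have D: "distinct [v0, v1, v2, v3, p0, w0, w1, w2, w3, w4]"
        using V(1) W(1) VV WW PP m1 dvw G(5) a0 b0 unfolding cyc_def by auto
      have False
        by (rule obs_7[OF hw3, of p0 w2 w3 w1 w4 w0]) (use D CF CW EF in \<open>auto simp: insert_commute\<close>)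
      then show ?thesis by blast
    next
      assume J: "length mid = 1" and L: "length vs' = 5" and M: "length ws' = 3"
      obtain v0 v1 v2 v3 v4 where VV: "vs' = [v0, v1, v2, v3, v4]" by (rule obtain5[OF L])
      obtain w0 w1 w2 where WW: "ws' = [w0, w1, w2]" by (rule obtain3[OF M])
      obtain p0 where PP: "mid = [p0]" by (rule obtain1[OF J])
      have a0: "a0 = v0" using V(4) VV by simp
      have b0: "b0 = w0" using W(4) WW by simp
      have CF: "{v0, v1} \<in> E" "{v1, v2} \<in> E" "{v2, v3} \<in> E" "{v3, v4} \<in> E" "{v4, v0} \<in> E" using V(1) VV by (simp_all add: cyc_def walk_def)
      have CW: "{w0, w1} \<in> E" "{w1, w2} \<in> E" "{w2, w0} \<in> E" using W(1) WW by (simp_all add: cyc_def walk_def)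
      have EF: "{v0, p0} \<in> E" "{p0, w0} \<in> E" using G(6) a0 b0 PP by (simp_all add: walk_def)
      have D: "distinct [v0, v1, v2, v3, v4, p0, w0, w1, w2]"
        using V(1) W(1) VV WW PP m1 dvw G(5) a0 b0 unfolding cyc_def by auto
      have False
        by (rule obs_12[OF hw3, of v2 v3 v4 v0 p0 w1 w2 w0]) (use D CF CW EF in \<open>auto simp: insert_commute\<close>)
      then show ?thesis by blast
    next
      assume J: "length mid = 1" and L: "length vs' = 5" and M: "length ws' = 4"
      obtain v0 v1 v2 v3 v4 where VV: "vs' = [v0, v1, v2, v3, v4]" by (rule obtain5[OF L])
      obtain w0 w1 w2 w3 where WW: "ws' = [w0, w1, w2, w3]" by (rule obtain4[OF M])
      obtain p0 where PP: "mid = [p0]" by (rule obtain1[OF J])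
      have a0: "a0 = v0" using V(4) VV by simp
      have b0: "b0 = w0" using W(4) WW by simp
      have CF: "{v0, v1} \<in> E" "{v1, v2} \<in> E" "{v2, v3} \<in> E" "{v3, v4} \<in> E" "{v4, v0} \<in> E" using V(1) VV by (simp_all add: cyc_def walk_def)
      have CW: "{w0, w1} \<in> E" "{w1, w2} \<in> E" "{w2, w3} \<in> E" "{w3, w0} \<in> E" using W(1) WW by (simp_all add: cyc_def walk_def)
      have EF: "{v0, p0} \<in> E" "{p0, w0} \<in> E" using G(6) a0 b0 PP by (simp_all add: walk_def)
      have D: "distinct [v0, v1, v2, v3, v4, p0, w0, w1, w2, w3]"
        using V(1) W(1) VV WW PP m1 dvw G(5) a0 b0 unfolding cyc_def by auto
      have False
        by (rule obs_4[OF hw3, of v0 p0 w2 w1 w3 w0]) (use D CF CW EF in \<open>auto simp: insert_commute\<close>)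
      then show ?thesis by blast
    next
      assume J: "length mid = 1" and L: "length vs' = 5" and M: "length ws' = 5"
      obtain v0 v1 v2 v3 v4 where VV: "vs' = [v0, v1, v2, v3, v4]" by (rule obtain5[OF L])
      obtain w0 w1 w2 w3 w4 where WW: "ws' = [w0, w1, w2, w3, w4]" by (rule obtain5[OF M])
      obtain p0 where PP: "mid = [p0]" by (rule obtain1[OF J])
      have a0: "a0 = v0" using V(4) VV by simp
      have b0: "b0 = w0" using W(4) WW by simp
      have CF: "{v0, v1} \<in> E" "{v1, v2} \<in> E" "{v2, v3} \<in> E" "{v3, v4} \<in> E" "{v4, v0} \<in> E" using V(1) VV by (simp_all add: cyc_def walk_def)
      have CW: "{w0, w1} \<in> E" "{w1, w2} \<in> E" "{w2, w3} \<in> E" "{w3, w4} \<in> E" "{w4, w0} \<in> E" using W(1) WW by (simp_all add: cyc_def walk_def)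
      have EF: "{v0, p0} \<in> E" "{p0, w0} \<in> E" using G(6) a0 b0 PP by (simp_all add: walk_def)
      have D: "distinct [v0, v1, v2, v3, v4, p0, w0, w1, w2, w3, w4]"
        using V(1) W(1) VV WW PP m1 dvw G(5) a0 b0 unfolding cyc_def by auto
      have False
        by (rule obs_7[OF hw3, of p0 w2 w3 w1 w4 w0]) (use D CF CW EF in \<open>auto simp: insert_commute\<close>)
      then show ?thesis by blast
    next
      assume J: "length mid = 2" and L: "length vs' = 3" and M: "length ws' = 3"
      obtain v0 v1 v2 where VV: "vs' = [v0, v1, v2]" by (rule obtain3[OF L])
      obtain w0 w1 w2 where WW: "ws' = [w0, w1, w2]" by (rule obtain3[OF M])
      obtain p0 p1 where PP: "mid = [p0, p1]" by (rule obtain2[OF J])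
      have a0: "a0 = v0" using V(4) VV by simp
      have b0: "b0 = w0" using W(4) WW by simp
      have CF: "{v0, v1} \<in> E" "{v1, v2} \<in> E" "{v2, v0} \<in> E" using V(1) VV by (simp_all add: cyc_def walk_def)
      have CW: "{w0, w1} \<in> E" "{w1, w2} \<in> E" "{w2, w0} \<in> E" using W(1) WW by (simp_all add: cyc_def walk_def)
      have EF: "{v0, p0} \<in> E" "{p0, p1} \<in> E" "{p1, w0} \<in> E" using G(6) a0 b0 PP by (simp_all add: walk_def)
      have D: "distinct [v0, v1, v2, p0, p1, w0, w1, w2]"
        using V(1) W(1) VV WW PP m1 dvw G(5) a0 b0 unfolding cyc_def by auto
      have False
        by (rule obs_12[OF hw3, of v1 v2 v0 p0 p1 w1 w2 w0]) (use D CF CW EF in \<open>auto simp: insert_commute\<close>)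
      then show ?thesis by blast
    next
      assume J: "length mid = 2" and L: "length vs' = 3" and M: "length ws' = 4"
      obtain v0 v1 v2 where VV: "vs' = [v0, v1, v2]" by (rule obtain3[OF L])
      obtain w0 w1 w2 w3 where WW: "ws' = [w0, w1, w2, w3]" by (rule obtain4[OF M])
      obtain p0 p1 where PP: "mid = [p0, p1]" by (rule obtain2[OF J])
      have a0: "a0 = v0" using V(4) VV by simp
      have b0: "b0 = w0" using W(4) WW by simp
      have CF: "{v0, v1} \<in> E" "{v1, v2} \<in> E" "{v2, v0} \<in> E" using V(1) VV by (simp_all add: cyc_def walk_def)
      have CW: "{w0, w1} \<in> E" "{w1, w2} \<in> E" "{w2, w3} \<in> E" "{w3, w0} \<in> E" using W(1) WW by (simp_all add: cyc_def walk_def)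
      have EF: "{v0, p0} \<in> E" "{p0, p1} \<in> E" "{p1, w0} \<in> E" using G(6) a0 b0 PP by (simp_all add: walk_def)
      have D: "distinct [v0, v1, v2, p0, p1, w0, w1, w2, w3]"
        using V(1) W(1) VV WW PP m1 dvw G(5) a0 b0 unfolding cyc_def by auto
      have False
        by (rule obs_4[OF hw3, of p0 p1 w2 w1 w3 w0]) (use D CF CW EF in \<open>auto simp: insert_commute\<close>)
      then show ?thesis by blast
    next
      assume J: "length mid = 2" and L: "length vs' = 3" and M: "length ws' = 5"
      obtain v0 v1 v2 where VV: "vs' = [v0, v1, v2]" by (rule obtain3[OF L])
      obtain w0 w1 w2 w3 w4 where WW: "ws' = [w0, w1, w2, w3, w4]" by (rule obtain5[OF M])
      obtain p0 p1 where PP: "mid = [p0, p1]" by (rule obtain2[OF J])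
      have a0: "a0 = v0" using V(4) VV by simp
      have b0: "b0 = w0" using W(4) WW by simp
      have CF: "{v0, v1} \<in> E" "{v1, v2} \<in> E" "{v2, v0} \<in> E" using V(1) VV by (simp_all add: cyc_def walk_def)
      have CW: "{w0, w1} \<in> E" "{w1, w2} \<in> E" "{w2, w3} \<in> E" "{w3, w4} \<in> E" "{w4, w0} \<in> E" using W(1) WW by (simp_all add: cyc_def walk_def)
      have EF: "{v0, p0} \<in> E" "{p0, p1} \<in> E" "{p1, w0} \<in> E" using G(6) a0 b0 PP by (simp_all add: walk_def)
      have D: "distinct [v0, v1, v2, p0, p1, w0, w1, w2, w3, w4]"
        using V(1) W(1) VV WW PP m1 dvw G(5) a0 b0 unfolding cyc_def by auto
      have False
        by (rule obs_7[OF hw3, of p1 w2 w3 w1 w4 w0]) (use D CF CW EF in \<open>auto simp: insert_commute\<close>)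
      then show ?thesis by blast
    next
      assume J: "length mid = 2" and L: "length vs' = 4" and M: "length ws' = 3"
      obtain v0 v1 v2 v3 where VV: "vs' = [v0, v1, v2, v3]" by (rule obtain4[OF L])
      obtain w0 w1 w2 where WW: "ws' = [w0, w1, w2]" by (rule obtain3[OF M])
      obtain p0 p1 where PP: "mid = [p0, p1]" by (rule obtain2[OF J])
      have a0: "a0 = v0" using V(4) VV by simp
      have b0: "b0 = w0" using W(4) WW by simp
      have CF: "{v0, v1} \<in> E" "{v1, v2} \<in> E" "{v2, v3} \<in> E" "{v3, v0} \<in> E" using V(1) VV by (simp_all add: cyc_def walk_def)
      have CW: "{w0, w1} \<in> E" "{w1, w2} \<in> E" "{w2, w0} \<in> E" using W(1) WW by (simp_all add: cyc_def walk_def)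
      have EF: "{v0, p0} \<in> E" "{p0, p1} \<in> E" "{p1, w0} \<in> E" using G(6) a0 b0 PP by (simp_all add: walk_def)
      have D: "distinct [v0, v1, v2, v3, p0, p1, w0, w1, w2]"
        using V(1) W(1) VV WW PP m1 dvw G(5) a0 b0 unfolding cyc_def by auto
      have False
        by (rule obs_12[OF hw3, of v2 v3 v0 p0 p1 w1 w2 w0]) (use D CF CW EF in \<open>auto simp: insert_commute\<close>)
      then show ?thesis by blast
    next
      assume J: "length mid = 2" and L: "length vs' = 4" and M: "length ws' = 4"
      obtain v0 v1 v2 v3 where VV: "vs' = [v0, v1, v2, v3]" by (rule obtain4[OF L])
      obtain w0 w1 w2 w3 where WW: "ws' = [w0, w1, w2, w3]" by (rule obtain4[OF M])
      obtain p0 p1 where PP: "mid = [p0, p1]" by (rule obtain2[OF J])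
      have a0: "a0 = v0" using V(4) VV by simp
      have b0: "b0 = w0" using W(4) WW by simp
      have CF: "{v0, v1} \<in> E" "{v1, v2} \<in> E" "{v2, v3} \<in> E" "{v3, v0} \<in> E" using V(1) VV by (simp_all add: cyc_def walk_def)
      have CW: "{w0, w1} \<in> E" "{w1, w2} \<in> E" "{w2, w3} \<in> E" "{w3, w0} \<in> E" using W(1) WW by (simp_all add: cyc_def walk_def)
      have EF: "{v0, p0} \<in> E" "{p0, p1} \<in> E" "{p1, w0} \<in> E" using G(6) a0 b0 PP by (simp_all add: walk_def)
      have D: "distinct [v0, v1, v2, v3, p0, p1, w0, w1, w2, w3]"
        using V(1) W(1) VV WW PP m1 dvw G(5) a0 b0 unfolding cyc_def by auto
      have False
        by (rule obs_4[OF hw3, of p0 p1 w2 w1 w3 w0]) (use D CF CW EF in \<open>auto simp: insert_commute\<close>)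
      then show ?thesis by blast
    next
      assume J: "length mid = 2" and L: "length vs' = 4" and M: "length ws' = 5"
      obtain v0 v1 v2 v3 where VV: "vs' = [v0, v1, v2, v3]" by (rule obtain4[OF L])
      obtain w0 w1 w2 w3 w4 where WW: "ws' = [w0, w1, w2, w3, w4]" by (rule obtain5[OF M])
      obtain p0 p1 where PP: "mid = [p0, p1]" by (rule obtain2[OF J])
      have a0: "a0 = v0" using V(4) VV by simp
      have b0: "b0 = w0" using W(4) WW by simp
      have CF: "{v0, v1} \<in> E" "{v1, v2} \<in> E" "{v2, v3} \<in> E" "{v3, v0} \<in> E" using V(1) VV by (simp_all add: cyc_def walk_def)
      have CW: "{w0, w1} \<in> E" "{w1, w2} \<in> E" "{w2, w3} \<in> E" "{w3, w4} \<in> E" "{w4, w0} \<in> E" using W(1) WW by (simp_all add: cyc_def walk_def)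
      have EF: "{v0, p0} \<in> E" "{p0, p1} \<in> E" "{p1, w0} \<in> E" using G(6) a0 b0 PP by (simp_all add: walk_def)
      have D: "distinct [v0, v1, v2, v3, p0, p1, w0, w1, w2, w3, w4]"
        using V(1) W(1) VV WW PP m1 dvw G(5) a0 b0 unfolding cyc_def by auto
      have False
        by (rule obs_7[OF hw3, of p1 w2 w3 w1 w4 w0]) (use D CF CW EF in \<open>auto simp: insert_commute\<close>)
      then show ?thesis by blast
    next
      assume J: "length mid = 2" and L: "length vs' = 5" and M: "length ws' = 3"
      obtain v0 v1 v2 v3 v4 where VV: "vs' = [v0, v1, v2, v3, v4]" by (rule obtain5[OF L])
      obtain w0 w1 w2 where WW: "ws' = [w0, w1, w2]" by (rule obtain3[OF M])
      obtain p0 p1 where PP: "mid = [p0, p1]" by (rule obtain2[OF J])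
      have a0: "a0 = v0" using V(4) VV by simp
      have b0: "b0 = w0" using W(4) WW by simp
      have CF: "{v0, v1} \<in> E" "{v1, v2} \<in> E" "{v2, v3} \<in> E" "{v3, v4} \<in> E" "{v4, v0} \<in> E" using V(1) VV by (simp_all add: cyc_def walk_def)
      have CW: "{w0, w1} \<in> E" "{w1, w2} \<in> E" "{w2, w0} \<in> E" using W(1) WW by (simp_all add: cyc_def walk_def)
      have EF: "{v0, p0} \<in> E" "{p0, p1} \<in> E" "{p1, w0} \<in> E" using G(6) a0 b0 PP by (simp_all add: walk_def)
      have D: "distinct [v0, v1, v2, v3, v4, p0, p1, w0, w1, w2]"
        using V(1) W(1) VV WW PP m1 dvw G(5) a0 b0 unfolding cyc_def by auto
      have False
        by (rule obs_12[OF hw3, of v3 v4 v0 p0 p1 w1 w2 w0]) (use D CF CW EF in \<open>auto simp: insert_commute\<close>)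
      then show ?thesis by blast
    next
      assume J: "length mid = 2" and L: "length vs' = 5" and M: "length ws' = 4"
      obtain v0 v1 v2 v3 v4 where VV: "vs' = [v0, v1, v2, v3, v4]" by (rule obtain5[OF L])
      obtain w0 w1 w2 w3 where WW: "ws' = [w0, w1, w2, w3]" by (rule obtain4[OF M])
      obtain p0 p1 where PP: "mid = [p0, p1]" by (rule obtain2[OF J])
      have a0: "a0 = v0" using V(4) VV by simp
      have b0: "b0 = w0" using W(4) WW by simp
      have CF: "{v0, v1} \<in> E" "{v1, v2} \<in> E" "{v2, v3} \<in> E" "{v3, v4} \<in> E" "{v4, v0} \<in> E" using V(1) VV by (simp_all add: cyc_def walk_def)
      have CW: "{w0, w1} \<in> E" "{w1, w2} \<in> E" "{w2, w3} \<in> E" "{w3, w0} \<in> E" using W(1) WW by (simp_all add: cyc_def walk_def)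
      have EF: "{v0, p0} \<in> E" "{p0, p1} \<in> E" "{p1, w0} \<in> E" using G(6) a0 b0 PP by (simp_all add: walk_def)
      have D: "distinct [v0, v1, v2, v3, v4, p0, p1, w0, w1, w2, w3]"
        using V(1) W(1) VV WW PP m1 dvw G(5) a0 b0 unfolding cyc_def by auto
      have False
        by (rule obs_4[OF hw3, of p0 p1 w2 w1 w3 w0]) (use D CF CW EF in \<open>auto simp: insert_commute\<close>)
      then show ?thesis by blast
    next
      assume J: "length mid = 2" and L: "length vs' = 5" and M: "length ws' = 5"
      obtain v0 v1 v2 v3 v4 where VV: "vs' = [v0, v1, v2, v3, v4]" by (rule obtain5[OF L])
      obtain w0 w1 w2 w3 w4 where WW: "ws' = [w0, w1, w2, w3, w4]" by (rule obtain5[OF M])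
      obtain p0 p1 where PP: "mid = [p0, p1]" by (rule obtain2[OF J])
      have a0: "a0 = v0" using V(4) VV by simp
      have b0: "b0 = w0" using W(4) WW by simp
      have CF: "{v0, v1} \<in> E" "{v1, v2} \<in> E" "{v2, v3} \<in> E" "{v3, v4} \<in> E" "{v4, v0} \<in> E" using V(1) VV by (simp_all add: cyc_def walk_def)
      have CW: "{w0, w1} \<in> E" "{w1, w2} \<in> E" "{w2, w3} \<in> E" "{w3, w4} \<in> E" "{w4, w0} \<in> E" using W(1) WW by (simp_all add: cyc_def walk_def)
      have EF: "{v0, p0} \<in> E" "{p0, p1} \<in> E" "{p1, w0} \<in> E" using G(6) a0 b0 PP by (simp_all add: walk_def)
      have D: "distinct [v0, v1, v2, v3, v4, p0, p1, w0, w1, w2, w3, w4]"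
        using V(1) W(1) VV WW PP m1 dvw G(5) a0 b0 unfolding cyc_def by auto
      have False
        by (rule obs_7[OF hw3, of p1 w2 w3 w1 w4 w0]) (use D CF CW EF in \<open>auto simp: insert_commute\<close>)
      then show ?thesis by blast
    qed
  qed
qed

theorem mainTheorem7:
  fixes V :: "'a set" and E :: "'a set set"
  assumes "simple_graph V E"
    and "connected_graph V E"
    and "\<exists>C1 C2. is_cycle E C1 \<and> is_cycle E C2 \<and> C1 \<noteq> C2"
    and "cat_num V E = 3"
  shows "card V = 6 \<and>
    (\<exists>a b c x y z. distinct [a, b, c, x, y, z] \<and> V = {a, b, c, x, y, z} \<and>
       E = {{a, b}, {b, c}, {a, c}, {x, y}, {y, z}, {x, z}, {a, x}})"
proof -
  have hw3: "\<forall>v. herder_wins E v 3" using hw3_of assms(1,4) by blast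
  obtain vs ws where c: "cyc E vs" "cyc E ws" "\<not> cedges ws \<subseteq> cedges vs"
    using two_cycles[OF assms(3)] by blast
  have lv: "length vs \<le> 5" using cyc_len[OF hw3 c(1)] .
  have lw: "length ws \<le> 5" using cyc_len[OF hw3 c(2)] .
  show ?thesis
  proof (cases "set ws \<inter> set vs = {}")
    case True
    show ?thesis using disjoint_case[OF hw3 assms(1,2) c(1,2) True lv lw] .
  next
    case False
    then show ?thesis using shared_case[OF hw3 c False lv lw] by blast
  qed
qed

end
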